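(* Let $g:\{\pm1\}^{m_1}\times\{\pm1\}^{m_2}\to\{\pm1\}$ and $g':\{\pm1\}^{m_1'}\times\{\pm1\}^{m_2'}\to\{\pm1\}$ be gadgets such that $\hat g(S,T)=0$ whenever $S=\emptyset$ or $T=\emptyset$, and likewise for $g'$. Then for all $k,d,n$, $$L_{1,k}(g,d,m_1,m_2,n)\le 2^{(m_1+m_2+m_1'+m_2')k/2}\,L_{1,k}(g',d,m_1',m_2',n).$$
   Context: $\hat g(S,T)=\mathbb{E}[g(\mathbf{x},\mathbf{y})\prod_{j\in S}\mathbf{x}_j\prod_{j\in T}\mathbf{y}_j]$ for uniform $\mathbf{x},\mathbf{y}$. For a randomized two-party protocol $\mathcal{C}:(\{\pm1\}^{m_1})^n\times(\{\pm1\}^{m_2})^n\to[-1,1]$ (value = expected output over internal randomness; inputs are $n$ blocks $x_i\in\{\pm1\}^{m_1}$, $y_i\in\{\pm1\}^{m_2}$), its $g$-fiber is $\mathcal{C}_{\downarrow g}(z)=\mathbb{E}[\mathcal{C}(\mathbf{x},\mathbf{y})\mid g(\mathbf{x}_i,\mathbf{y}_i)=z_i\ \forall i]$ for uniform $\mathbf{x},\mathbf{y}$. For $f:\{\pm1\}^n\to\mathbb{R}$, $L_{1,k}(f)=\sum_{|I|=k}|\hat f(I)|$. $L_{1,k}(g,d,m_1,m_2,n)$ denotes the supremum of $L_{1,k}(\mathcal{C}_{\downarrow g})$ over all such randomized protocols with at most $d$ bits of communication (and analogously for $g'$). *)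

theory Defs
  imports "HOL-Probability.Probability"
begin

definition cube :: "nat \<Rightarrow> (nat \<Rightarrow> real) set" where
  "cube m = PiE {..<m} (\<lambda>_. {-1, 1})"

definition blocks :: "nat \<Rightarrow> nat \<Rightarrow> (nat \<Rightarrow> nat \<Rightarrow> real) set" where
  "blocks n m = PiE {..<n} (\<lambda>_. cube m)"

definition gadget_coeff ::
  "((nat \<Rightarrow> real) \<Rightarrow> (nat \<Rightarrow> real) \<Rightarrow> real) \<Rightarrow> nat \<Rightarrow> nat \<Rightarrow> nat set \<Rightarrow> nat set \<Rightarrow> real" where
  "gadget_coeff g m1 m2 S T =
     (\<Sum>x\<in>cube m1. \<Sum>y\<in>cube m2. g x y * (\<Prod>j\<in>S. x j) * (\<Prod>j\<in>T. y j)) / (2 ^ m1 * 2 ^ m2)"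

definition fourier :: "nat \<Rightarrow> ((nat \<Rightarrow> real) \<Rightarrow> real) \<Rightarrow> nat set \<Rightarrow> real" where
  "fourier n f I = (\<Sum>z\<in>cube n. f z * (\<Prod>i\<in>I. z i)) / 2 ^ n"

definition L1k :: "nat \<Rightarrow> nat \<Rightarrow> ((nat \<Rightarrow> real) \<Rightarrow> real) \<Rightarrow> real" where
  "L1k n k f = (\<Sum>I\<in>{I. I \<subseteq> {..<n} \<and> card I = k}. \<bar>fourier n f I\<bar>)"

text \<open>Deterministic protocol trees: at an internal node one of the players sends a bit
  computed from her/his entire input; leaves carry an output value.\<close>
datatype ('a, 'b) proto =
    Leaf real
  | Alice "'a \<Rightarrow> bool" "('a, 'b) proto" "('a, 'b) proto"
  | Bob "'b \<Rightarrow> bool" "('a, 'b) proto" "('a, 'b) proto"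

fun run :: "('a, 'b) proto \<Rightarrow> 'a \<Rightarrow> 'b \<Rightarrow> real" where
  "run (Leaf v) x y = v"
| "run (Alice f l r) x y = (if f x then run l x y else run r x y)"
| "run (Bob f l r) x y = (if f y then run l x y else run r x y)"

fun cost :: "('a, 'b) proto \<Rightarrow> nat" where
  "cost (Leaf v) = 0"
| "cost (Alice f l r) = Suc (max (cost l) (cost r))"
| "cost (Bob f l r) = Suc (max (cost l) (cost r))"

fun leaves_ok :: "('a, 'b) proto \<Rightarrow> bool" where
  "leaves_ok (Leaf v) = (v \<in> {-1..1})"
| "leaves_ok (Alice f l r) = (leaves_ok l \<and> leaves_ok r)"
| "leaves_ok (Bob f l r) = (leaves_ok l \<and> leaves_ok r)"

text \<open>Value functions of randomized protocols with at most d bits of communication: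
  expected output over a random choice (internal randomness) of a deterministic protocol.\<close>
definition rand_protocols :: "nat \<Rightarrow> ('a \<Rightarrow> 'b \<Rightarrow> real) set" where
  "rand_protocols d = {C. \<exists>p :: ('a, 'b) proto pmf.
      (\<forall>P\<in>set_pmf p. cost P \<le> d \<and> leaves_ok P) \<and>
      C = (\<lambda>x y. measure_pmf.expectation p (\<lambda>P. run P x y))}"

definition fiber ::
  "((nat \<Rightarrow> real) \<Rightarrow> (nat \<Rightarrow> real) \<Rightarrow> real) \<Rightarrow> nat \<Rightarrow> nat \<Rightarrow> nat \<Rightarrow>
   ((nat \<Rightarrow> nat \<Rightarrow> real) \<Rightarrow> (nat \<Rightarrow> nat \<Rightarrow> real) \<Rightarrow> real) \<Rightarrow> (nat \<Rightarrow> real) \<Rightarrow> real" where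
  "fiber g m1 m2 n C z =
     (let E = {(x, y). x \<in> blocks n m1 \<and> y \<in> blocks n m2 \<and> (\<forall>i<n. g (x i) (y i) = z i)}
      in (\<Sum>(x, y)\<in>E. C x y) / real (card E))"

definition L1k_gadget ::
  "nat \<Rightarrow> ((nat \<Rightarrow> real) \<Rightarrow> (nat \<Rightarrow> real) \<Rightarrow> real) \<Rightarrow> nat \<Rightarrow> nat \<Rightarrow> nat \<Rightarrow> nat \<Rightarrow> real" where
  "L1k_gadget k g d m1 m2 n = (SUP C\<in>rand_protocols d. L1k n k (fiber g m1 m2 n C))"

definition is_gadget :: "((nat \<Rightarrow> real) \<Rightarrow> (nat \<Rightarrow> real) \<Rightarrow> real) \<Rightarrow> nat \<Rightarrow> nat \<Rightarrow> bool" where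
  "is_gadget g m1 m2 \<longleftrightarrow> (\<forall>x\<in>cube m1. \<forall>y\<in>cube m2. g x y \<in> {-1, 1})"

end

theory Submission
  imports Defs
begin



lemma cube_finite[simp]: "finite (cube m)"
  unfolding cube_def by (auto intro!: finite_PiE)

lemma card_cube: "card (cube m) = 2 ^ m"
  unfolding cube_def by (simp add: card_PiE numeral_2_eq_2)

lemma cube_ne: "cube m \<noteq> {}"
  unfolding cube_def by (simp add: PiE_eq_empty_iff)

lemma blocks_finite[simp]: "finite (blocks n m)"
  unfolding blocks_def by (auto intro!: finite_PiE)

lemma card_blocks: "card (blocks n m) = (2 ^ m) ^ n"
  unfolding blocks_def by (simp add: card_PiE card_cube)

lemma cube_val: "x \<in> cube m \<Longrightarrow> j < m \<Longrightarrow> x j = -1 \<or> x j = 1"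
  unfolding cube_def by auto

lemma cube_ext: "x \<in> cube m \<Longrightarrow> \<not> j < m \<Longrightarrow> x j = undefined"
  unfolding cube_def by auto

lemma cube_sq: "x \<in> cube m \<Longrightarrow> j < m \<Longrightarrow> x j * x j = 1"
  using cube_val by fastforce

definition flipc :: "nat \<Rightarrow> (nat \<Rightarrow> real) \<Rightarrow> nat \<Rightarrow> real" where
  "flipc j x = x(j := - x j)"

lemma flip_cube: "x \<in> cube m \<Longrightarrow> j < m \<Longrightarrow> flipc j x \<in> cube m"
  unfolding cube_def flipc_def by (auto simp: PiE_iff extensional_def)

lemma flip_flip[simp]: "flipc j (flipc j x) = x"
  unfolding flipc_def by auto

lemma flip_neq: "x \<in> cube m \<Longrightarrow> j < m \<Longrightarrow> flipc j x \<noteq> x"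
  unfolding flipc_def by (metis cube_val fun_upd_same neg_equal_zero zero_neq_neg_one zero_neq_one)

lemma chi_flip:
  assumes "finite S" "j \<in> S"
  shows "(\<Prod>i\<in>S. flipc j x i) = - (\<Prod>i\<in>S. x i)"
proof -
  have "(\<Prod>i\<in>S. flipc j x i) = flipc j x j * (\<Prod>i\<in>S-{j}. flipc j x i)"
    using assms by (simp add: prod.remove)
  also have "(\<Prod>i\<in>S-{j}. flipc j x i) = (\<Prod>i\<in>S-{j}. x i)"
    by (rule prod.cong) (auto simp: flipc_def)
  also have "flipc j x j = - x j" by (simp add: flipc_def)
  also have "- x j * (\<Prod>i\<in>S-{j}. x i) = - (\<Prod>i\<in>S. x i)"
    using assms by (simp add: prod.remove)
  finally show ?thesis .
qed

lemma flip_bij: "j < m \<Longrightarrow> bij_betw (flipc j) (cube m) (cube m)"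
  by (rule bij_betw_byWitness[where f'="flipc j"]) (auto simp: flip_cube)

lemma sum_chi_zero:
  assumes "S \<subseteq> {..<m}" "S \<noteq> {}"
  shows "(\<Sum>x\<in>cube m. \<Prod>j\<in>S. x j) = 0"
proof -
  define j where "j = Min S"
  have fS: "finite S" using assms finite_subset by blast
  have jS: "j \<in> S" using assms fS unfolding j_def by simp
  have jm: "j < m" using jS assms by auto
  have "(\<Sum>x\<in>cube m. \<Prod>i\<in>S. x i) = (\<Sum>x\<in>cube m. \<Prod>i\<in>S. flipc j x i)"
    using sum.reindex_bij_betw[OF flip_bij[OF jm], of "\<lambda>x. \<Prod>i\<in>S. x i"] by simp
  also have "\<dots> = - (\<Sum>x\<in>cube m. \<Prod>i\<in>S. x i)"
    using chi_flip[OF fS jS] by (simp add: sum_negf)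
  finally show ?thesis by simp
qed

lemma ortho:
  assumes "x \<in> cube m" "a \<in> cube m"
  shows "(\<Sum>S\<in>Pow {..<m}. (\<Prod>j\<in>S. x j) * (\<Prod>j\<in>S. a j)) = (if x = a then 2 ^ m else 0)"
proof -
  have "(\<Sum>S\<in>Pow {..<m}. (\<Prod>j\<in>S. x j) * (\<Prod>j\<in>S. a j))
      = (\<Sum>S\<in>Pow {..<m}. (\<Prod>j\<in>S. x j * a j) * (\<Prod>j\<in>{..<m}-S. 1))"
    by (simp add: prod.distrib)
  also have "\<dots> = (\<Prod>j\<in>{..<m}. x j * a j + 1)"
    by (rule prod_add[symmetric]) simp
  also have "\<dots> = (if x = a then 2 ^ m else 0)"
  proof (cases "x = a")
    case True
    then have "(\<Prod>j\<in>{..<m}. x j * a j + 1) = (\<Prod>j\<in>{..<m}. 2)"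
      using cube_sq[OF assms(1)] by (intro prod.cong) auto
    then show ?thesis using True by simp
  next
    case False
    then obtain j where "x j \<noteq> a j" by auto
    then have jm: "j < m" using cube_ext[OF assms(1)] cube_ext[OF assms(2)] by metis
    then have "x j * a j + 1 = 0"
      using \<open>x j \<noteq> a j\<close> cube_val[OF assms(1) jm] cube_val[OF assms(2) jm] by auto
    then have "(\<Prod>j\<in>{..<m}. x j * a j + 1) = 0"
      using jm by (intro prod_zero) auto
    then show ?thesis using False by simp
  qed
  finally show ?thesis .
qed

lemma sum4_swap:
  fixes F :: "'a \<Rightarrow> 'b \<Rightarrow> 'c \<Rightarrow> 'd \<Rightarrow> real"
  shows "(\<Sum>x\<in>A. \<Sum>y\<in>B. \<Sum>S\<in>C. \<Sum>T\<in>D. F x y S T) = (\<Sum>S\<in>C. \<Sum>T\<in>D. \<Sum>x\<in>A. \<Sum>y\<in>B. F x y S T)"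
proof -
  have "(\<Sum>x\<in>A. \<Sum>y\<in>B. \<Sum>S\<in>C. \<Sum>T\<in>D. F x y S T) = (\<Sum>x\<in>A. \<Sum>S\<in>C. \<Sum>T\<in>D. \<Sum>y\<in>B. F x y S T)"
    by (intro sum.cong refl) (subst sum.swap, rule sum.cong, simp, rule sum.swap)
  also have "\<dots> = (\<Sum>S\<in>C. \<Sum>T\<in>D. \<Sum>x\<in>A. \<Sum>y\<in>B. F x y S T)"
    by (subst sum.swap, rule sum.cong, simp, rule sum.swap)
  finally show ?thesis .
qed

lemma inversion:
  assumes a: "a \<in> cube m1" and b: "b \<in> cube m2"
  shows "(\<Sum>S\<in>Pow {..<m1}. \<Sum>T\<in>Pow {..<m2}. gadget_coeff g m1 m2 S T * (\<Prod>j\<in>S. a j) * (\<Prod>j\<in>T. b j)) = g a b"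
proof -
  let ?N = "(2::real) ^ m1 * 2 ^ m2"
  have "(\<Sum>x\<in>cube m1. \<Sum>y\<in>cube m2. g x y * (\<Sum>S\<in>Pow {..<m1}. (\<Prod>j\<in>S. x j) * (\<Prod>j\<in>S. a j))
          * (\<Sum>T\<in>Pow {..<m2}. (\<Prod>j\<in>T. y j) * (\<Prod>j\<in>T. b j)))
      = (\<Sum>x\<in>cube m1. \<Sum>y\<in>cube m2. g x y * (if x = a then 2 ^ m1 else 0) * (if y = b then 2 ^ m2 else 0))"
    by (intro sum.cong refl) (simp add: ortho a b)
  also have "\<dots> = (\<Sum>x\<in>cube m1. \<Sum>y\<in>cube m2. if x = a then (if y = b then g a b * ?N else 0) else 0)"
    by (intro sum.cong refl) auto
  also have "\<dots> = (\<Sum>x\<in>cube m1. if x = a then (\<Sum>y\<in>cube m2. if y = b then g a b * ?N else 0) else 0)"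
    by (intro sum.cong refl) auto
  also have "\<dots> = g a b * ?N"
    using a b by simp
  finally have 1: "(\<Sum>x\<in>cube m1. \<Sum>y\<in>cube m2. g x y * (\<Sum>S\<in>Pow {..<m1}. (\<Prod>j\<in>S. x j) * (\<Prod>j\<in>S. a j))
          * (\<Sum>T\<in>Pow {..<m2}. (\<Prod>j\<in>T. y j) * (\<Prod>j\<in>T. b j))) = g a b * ?N" .
  have 2: "(\<Sum>x\<in>cube m1. \<Sum>y\<in>cube m2. g x y * (\<Sum>S\<in>Pow {..<m1}. (\<Prod>j\<in>S. x j) * (\<Prod>j\<in>S. a j))
          * (\<Sum>T\<in>Pow {..<m2}. (\<Prod>j\<in>T. y j) * (\<Prod>j\<in>T. b j)))
      = (\<Sum>x\<in>cube m1. \<Sum>y\<in>cube m2. \<Sum>S\<in>Pow {..<m1}. \<Sum>T\<in>Pow {..<m2}.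
           g x y * (\<Prod>j\<in>S. x j) * (\<Prod>j\<in>T. y j) * ((\<Prod>j\<in>S. a j) * (\<Prod>j\<in>T. b j)))"
    by (simp add: sum_distrib_left sum_distrib_right mult_ac)
  have 3: "(\<Sum>S\<in>Pow {..<m1}. \<Sum>T\<in>Pow {..<m2}. \<Sum>x\<in>cube m1. \<Sum>y\<in>cube m2.
           g x y * (\<Prod>j\<in>S. x j) * (\<Prod>j\<in>T. y j) * ((\<Prod>j\<in>S. a j) * (\<Prod>j\<in>T. b j)))
        = ?N * (\<Sum>S\<in>Pow {..<m1}. \<Sum>T\<in>Pow {..<m2}. gadget_coeff g m1 m2 S T * (\<Prod>j\<in>S. a j) * (\<Prod>j\<in>T. b j))"
  proof -
    have c: "?N * gadget_coeff g m1 m2 S T = (\<Sum>x\<in>cube m1. \<Sum>y\<in>cube m2. g x y * (\<Prod>j\<in>S. x j) * (\<Prod>j\<in>T. y j))" for S T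
      unfolding gadget_coeff_def by simp
    have "(\<Sum>S\<in>Pow {..<m1}. \<Sum>T\<in>Pow {..<m2}. \<Sum>x\<in>cube m1. \<Sum>y\<in>cube m2.
           g x y * (\<Prod>j\<in>S. x j) * (\<Prod>j\<in>T. y j) * ((\<Prod>j\<in>S. a j) * (\<Prod>j\<in>T. b j)))
       = (\<Sum>S\<in>Pow {..<m1}. \<Sum>T\<in>Pow {..<m2}. (?N * gadget_coeff g m1 m2 S T) * ((\<Prod>j\<in>S. a j) * (\<Prod>j\<in>T. b j)))"
      by (intro sum.cong refl) (simp only: c sum_distrib_right)
    then show ?thesis
      by (simp add: sum_distrib_left mult_ac)
  qed
  have "?N * (\<Sum>S\<in>Pow {..<m1}. \<Sum>T\<in>Pow {..<m2}. gadget_coeff g m1 m2 S T * (\<Prod>j\<in>S. a j) * (\<Prod>j\<in>T. b j)) = ?N * g a b"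
    (is "?L = _")
  proof -
    have "?L = (\<Sum>S\<in>Pow {..<m1}. \<Sum>T\<in>Pow {..<m2}. \<Sum>x\<in>cube m1. \<Sum>y\<in>cube m2.
           g x y * (\<Prod>j\<in>S. x j) * (\<Prod>j\<in>T. y j) * ((\<Prod>j\<in>S. a j) * (\<Prod>j\<in>T. b j)))"
      using 3 by (rule sym)
    also have "\<dots> = (\<Sum>x\<in>cube m1. \<Sum>y\<in>cube m2. \<Sum>S\<in>Pow {..<m1}. \<Sum>T\<in>Pow {..<m2}.
           g x y * (\<Prod>j\<in>S. x j) * (\<Prod>j\<in>T. y j) * ((\<Prod>j\<in>S. a j) * (\<Prod>j\<in>T. b j)))"
      by (rule sum4_swap[symmetric])
    also have "\<dots> = g a b * ?N" using 2 1 by simp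
    finally show ?thesis by simp
  qed
  then show ?thesis by simp
qed

lemma parseval:
  assumes "is_gadget g m1 m2"
  shows "(\<Sum>S\<in>Pow {..<m1}. \<Sum>T\<in>Pow {..<m2}. (gadget_coeff g m1 m2 S T)\<^sup>2) = 1"
proof -
  let ?N = "(2::real) ^ m1 * 2 ^ m2"
  let ?c = "gadget_coeff g m1 m2"
  have c: "?N * ?c S T = (\<Sum>x\<in>cube m1. \<Sum>y\<in>cube m2. g x y * (\<Prod>j\<in>S. x j) * (\<Prod>j\<in>T. y j))" for S T
    unfolding gadget_coeff_def by simp
  have "?N * (\<Sum>S\<in>Pow {..<m1}. \<Sum>T\<in>Pow {..<m2}. (?c S T)\<^sup>2)
      = (\<Sum>S\<in>Pow {..<m1}. \<Sum>T\<in>Pow {..<m2}. (?N * ?c S T) * ?c S T)"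
    by (simp add: sum_distrib_left power2_eq_square mult_ac)
  also have "\<dots> = (\<Sum>S\<in>Pow {..<m1}. \<Sum>T\<in>Pow {..<m2}. \<Sum>x\<in>cube m1. \<Sum>y\<in>cube m2.
        g x y * (?c S T * (\<Prod>j\<in>S. x j) * (\<Prod>j\<in>T. y j)))"
    by (intro sum.cong refl) (subst c, simp add: sum_distrib_right sum_distrib_left mult_ac)
  also have "\<dots> = (\<Sum>x\<in>cube m1. \<Sum>y\<in>cube m2. \<Sum>S\<in>Pow {..<m1}. \<Sum>T\<in>Pow {..<m2}.
        g x y * (?c S T * (\<Prod>j\<in>S. x j) * (\<Prod>j\<in>T. y j)))"
    by (rule sum4_swap[symmetric])
  also have "\<dots> = (\<Sum>x\<in>cube m1. \<Sum>y\<in>cube m2. g x y * g x y)"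
    by (intro sum.cong refl) (simp only: inversion sum_distrib_left[symmetric])
  also have "\<dots> = (\<Sum>x\<in>cube m1. \<Sum>y\<in>cube m2. 1)"
    using assms unfolding is_gadget_def by (intro sum.cong refl) fastforce
  also have "\<dots> = ?N" by (simp add: card_cube)
  finally show ?thesis by simp
qed





lemma gadget_count:
  assumes gad: "is_gadget g m1 m2" and bal: "gadget_coeff g m1 m2 {} {} = 0" and c: "c \<in> {-1, 1::real}"
  shows "2 * real (card {p \<in> cube m1 \<times> cube m2. g (fst p) (snd p) = c}) = 2 ^ m1 * 2 ^ m2"
proof -
  let ?X = "cube m1 \<times> cube m2"
  let ?P = "{p \<in> ?X. g (fst p) (snd p) = 1}"
  let ?M = "{p \<in> ?X. g (fst p) (snd p) = -1}"
  have fX: "finite ?X" by simp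
  have "\<forall>p\<in>?X. g (fst p) (snd p) = -1 \<or> g (fst p) (snd p) = 1" using gad unfolding is_gadget_def by auto
  then have un: "?X = ?P \<union> ?M" by blast
  have dj: "?P \<inter> ?M = {}" by auto
  have "(\<Sum>p\<in>?X. g (fst p) (snd p)) = (\<Sum>x\<in>cube m1. \<Sum>y\<in>cube m2. g x y)"
    by (simp add: sum.cartesian_product')
  also have "\<dots> = 0" using bal unfolding gadget_coeff_def by simp
  finally have s0: "(\<Sum>p\<in>?X. g (fst p) (snd p)) = 0" .
  have "(\<Sum>p\<in>?X. g (fst p) (snd p)) = (\<Sum>p\<in>?P. g (fst p) (snd p)) + (\<Sum>p\<in>?M. g (fst p) (snd p))"
    by (subst un, rule sum.union_disjoint) auto
  also have "\<dots> = real (card ?P) - real (card ?M)" by simp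
  finally have e1: "real (card ?P) = real (card ?M)" using s0 by simp
  have "card ?X = card ?P + card ?M"
    by (subst un, rule card_Un_disjoint) auto
  then have "real (card ?P) + real (card ?M) = real (card ?X)" by simp
  then have e2: "real (card ?P) + real (card ?M) = 2 ^ m1 * 2 ^ m2"
    by (simp add: card_cartesian_product card_cube)
  show ?thesis using c e1 e2 by auto
qed

lemma restrict_eq_ext: "z \<in> extensional A \<Longrightarrow> (restrict h A = z) = (\<forall>i\<in>A. h i = z i)"
  by (metis extensionalityI restrict_apply' restrict_extensional)

lemma cube_extensional: "z \<in> cube n \<Longrightarrow> z \<in> extensional {..<n}"
  unfolding cube_def by (simp add: PiE_iff)

definition fibset :: "((nat \<Rightarrow> real) \<Rightarrow> (nat \<Rightarrow> real) \<Rightarrow> real) \<Rightarrow> nat \<Rightarrow> nat \<Rightarrow> nat \<Rightarrow> (nat \<Rightarrow> real) \<Rightarrow> _" where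
  "fibset g m1 m2 n z = {(x, y). x \<in> blocks n m1 \<and> y \<in> blocks n m2 \<and> (\<forall>i<n. g (x i) (y i) = z i)}"

lemma fiber_alt: "fiber g m1 m2 n C z = (\<Sum>(x, y)\<in>fibset g m1 m2 n z. C x y) / real (card (fibset g m1 m2 n z))"
  unfolding fiber_def fibset_def Let_def by simp

lemma card_fibset:
  assumes gad: "is_gadget g m1 m2" and bal: "gadget_coeff g m1 m2 {} {} = 0" and z: "z \<in> cube n"
  shows "2 ^ n * real (card (fibset g m1 m2 n z)) = (2 ^ m1 * 2 ^ m2) ^ n"
proof -
  define F where "F c = {p \<in> cube m1 \<times> cube m2. g (fst p) (snd p) = c}" for c
  let ?h = "\<lambda>(x, y). (\<lambda>i\<in>{..<n}. (x i, y i))"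
  let ?k = "\<lambda>p. ((\<lambda>i\<in>{..<n}. fst (p i)), (\<lambda>i\<in>{..<n}. snd (p i)))"
  have "bij_betw ?h (fibset g m1 m2 n z) (PiE {..<n} (\<lambda>i. F (z i)))"
  proof (rule bij_betw_byWitness[where f'="?k"])
    show "\<forall>a\<in>fibset g m1 m2 n z. ?k (?h a) = a"
    proof
      fix a assume a: "a \<in> fibset g m1 m2 n z"
      obtain x y where a': "a = (x, y)" by (cases a)
      have xe: "x \<in> extensional {..<n}" "y \<in> extensional {..<n}"
        using a unfolding a' fibset_def blocks_def by (auto simp: PiE_iff)
      have "(\<lambda>i\<in>{..<n}. fst ((\<lambda>i\<in>{..<n}. (x i, y i)) i)) = (\<lambda>i\<in>{..<n}. x i)"
        by (rule restrict_cong) auto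
      moreover have "(\<lambda>i\<in>{..<n}. snd ((\<lambda>i\<in>{..<n}. (x i, y i)) i)) = (\<lambda>i\<in>{..<n}. y i)"
        by (rule restrict_cong) auto
      ultimately show "?k (?h a) = a" unfolding a' using xe by (simp add: extensional_restrict)
    qed
    show "\<forall>a'\<in>PiE {..<n} (\<lambda>i. F (z i)). ?h (?k a') = a'"
    proof
      fix p assume p: "p \<in> PiE {..<n} (\<lambda>i. F (z i))"
      have "?h (?k p) = (\<lambda>i\<in>{..<n}. (fst (p i), snd (p i)))"
        by simp (rule restrict_cong, auto)
      also have "\<dots> = (\<lambda>i\<in>{..<n}. p i)" by simp
      also have "\<dots> = p" using p by (simp add: PiE_iff extensional_restrict)
      finally show "?h (?k p) = p" .
    qed
    show "?h ` fibset g m1 m2 n z \<subseteq> PiE {..<n} (\<lambda>i. F (z i))"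
    proof (rule subsetI)
      fix q assume "q \<in> ?h ` fibset g m1 m2 n z"
      then obtain x y where xy: "(x, y) \<in> fibset g m1 m2 n z" and q: "q = ?h (x, y)" by auto
      show "q \<in> PiE {..<n} (\<lambda>i. F (z i))" unfolding q using xy
        by (simp add: fibset_def blocks_def F_def restrict_PiE_iff PiE_iff)
    qed
    show "?k ` PiE {..<n} (\<lambda>i. F (z i)) \<subseteq> fibset g m1 m2 n z"
    proof (rule subsetI)
      fix q assume "q \<in> ?k ` PiE {..<n} (\<lambda>i. F (z i))"
      then obtain p where p: "p \<in> PiE {..<n} (\<lambda>i. F (z i))" and q: "q = ?k p" by blast
      have pi: "fst (p i) \<in> cube m1 \<and> snd (p i) \<in> cube m2 \<and> g (fst (p i)) (snd (p i)) = z i" if "i < n" for i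
      proof -
        have "p i \<in> F (z i)" using p that by blast
        then show ?thesis unfolding F_def by (auto simp: mem_Times_iff)
      qed
      show "q \<in> fibset g m1 m2 n z" unfolding q fibset_def blocks_def
        using pi by (simp add: restrict_PiE_iff)
    qed
  qed
  then have "card (fibset g m1 m2 n z) = (\<Prod>i<n. card (F (z i)))"
    by (simp add: bij_betw_same_card card_PiE)
  then have "real (card (fibset g m1 m2 n z)) = (\<Prod>i<n. real (card (F (z i))))" by simp
  then have "2 ^ n * real (card (fibset g m1 m2 n z)) = (\<Prod>i<n. 2 * real (card (F (z i))))"
    by (simp add: prod.distrib)
  also have "\<dots> = (\<Prod>i<n. 2 ^ m1 * 2 ^ m2)"
    using gadget_count[OF gad bal] z cube_val unfolding F_def by (intro prod.cong refl) blast
  finally show ?thesis by simp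
qed

lemma fiber_fourier:
  assumes gad: "is_gadget g m1 m2" and bal: "gadget_coeff g m1 m2 {} {} = 0" and I: "I \<subseteq> {..<n}"
  shows "fourier n (fiber g m1 m2 n C) I =
     (\<Sum>x\<in>blocks n m1. \<Sum>y\<in>blocks n m2. C x y * (\<Prod>i\<in>I. g (x i) (y i))) / ((2 ^ m1 * 2 ^ m2) ^ n)"
proof -
  let ?K = "((2::real) ^ m1 * 2 ^ m2) ^ n / 2 ^ n"
  let ?f = "\<lambda>p. (\<lambda>i\<in>{..<n}. g (fst p i) (snd p i))"
  let ?S = "blocks n m1 \<times> blocks n m2"
  let ?G = "\<lambda>p. C (fst p) (snd p) * (\<Prod>i\<in>I. g (fst p i) (snd p i))"
  have cardK: "real (card (fibset g m1 m2 n z)) = ?K" if "z \<in> cube n" for z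
    using card_fibset[OF gad bal that] by (simp add: field_simps)
  have fs: "fibset g m1 m2 n z = {p \<in> ?S. ?f p = z}" if "z \<in> cube n" for z
    using restrict_eq_ext[OF cube_extensional[OF that]] by (auto simp: fibset_def)
  have gv: "g (fst p i) (snd p i) \<in> {-1, 1}" if "p \<in> ?S" "i < n" for p i
  proof -
    have "fst p \<in> blocks n m1" "snd p \<in> blocks n m2" using that(1) by (auto simp: mem_Times_iff)
    then have "fst p i \<in> cube m1" "snd p i \<in> cube m2" using that(2) unfolding blocks_def
      by (auto intro: PiE_mem)
    then show ?thesis using gad unfolding is_gadget_def by blast
  qed
  have img: "?f ` ?S \<subseteq> cube n"
  proof (rule image_subsetI)
    fix p assume "p \<in> ?S"
    then show "?f p \<in> cube n" using gv unfolding cube_def[of n] by (simp add: restrict_PiE_iff)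
  qed
  have "(\<Sum>z\<in>cube n. fiber g m1 m2 n C z * (\<Prod>i\<in>I. z i))
      = (\<Sum>z\<in>cube n. (\<Sum>p\<in>{p \<in> ?S. ?f p = z}. ?G p) / ?K)"
  proof (intro sum.cong refl)
    fix z assume z: "z \<in> cube n"
    have "fiber g m1 m2 n C z * (\<Prod>i\<in>I. z i) = (\<Sum>p\<in>{p \<in> ?S. ?f p = z}. C (fst p) (snd p) * (\<Prod>i\<in>I. z i)) / ?K"
      unfolding fiber_alt cardK[OF z] unfolding fs[OF z] by (simp add: sum_distrib_right sum_distrib_left case_prod_beta mult_ac)
    also have "\<dots> = (\<Sum>p\<in>{p \<in> ?S. ?f p = z}. ?G p) / ?K"
    proof -
      have "(\<Prod>i\<in>I. z i) = (\<Prod>i\<in>I. g (fst p i) (snd p i))" if "p \<in> {p \<in> ?S. ?f p = z}" for p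
        using that I restrict_eq_ext[OF cube_extensional[OF z]] by (intro prod.cong refl) auto
      then show ?thesis by (intro arg_cong2[where f="(/)"] sum.cong refl) auto
    qed
    finally show "fiber g m1 m2 n C z * (\<Prod>i\<in>I. z i) = (\<Sum>p\<in>{p \<in> ?S. ?f p = z}. ?G p) / ?K" .
  qed
  also have "\<dots> = (\<Sum>p\<in>?S. ?G p) / ?K"
  proof -
    have grp: "(\<Sum>z\<in>cube n. \<Sum>p\<in>{p \<in> ?S. ?f p = z}. ?G p) = (\<Sum>p\<in>?S. ?G p)"
      by (rule sum.group[OF _ _ img]) simp_all
    show ?thesis by (simp only: sum_divide_distrib[symmetric] grp)
  qed
  also have "(\<Sum>p\<in>?S. ?G p) = (\<Sum>x\<in>blocks n m1. \<Sum>y\<in>blocks n m2. C x y * (\<Prod>i\<in>I. g (x i) (y i)))"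
    by (simp add: sum.cartesian_product')
  finally show ?thesis unfolding fourier_def by (simp add: field_simps)
qed




fun mapP :: "('c \<Rightarrow> 'a) \<Rightarrow> ('d \<Rightarrow> 'b) \<Rightarrow> ('a, 'b) proto \<Rightarrow> ('c, 'd) proto" where
  "mapP \<phi> \<psi> (Leaf v) = Leaf v"
| "mapP \<phi> \<psi> (Alice f l r) = Alice (f \<circ> \<phi>) (mapP \<phi> \<psi> l) (mapP \<phi> \<psi> r)"
| "mapP \<phi> \<psi> (Bob f l r) = Bob (f \<circ> \<psi>) (mapP \<phi> \<psi> l) (mapP \<phi> \<psi> r)"

lemma run_mapP[simp]: "run (mapP \<phi> \<psi> P) x y = run P (\<phi> x) (\<psi> y)"
  by (induction P) auto

lemma cost_mapP[simp]: "cost (mapP \<phi> \<psi> P) = cost P"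
  by (induction P) auto

lemma leaves_ok_mapP[simp]: "leaves_ok (mapP \<phi> \<psi> P) = leaves_ok P"
  by (induction P) auto

lemma run_bound: "leaves_ok P \<Longrightarrow> \<bar>run P x y\<bar> \<le> 1"
proof (induction P)
  case (Leaf v)
  then show ?case by (simp add: abs_le_iff)
qed auto

lemma expect_clamp:
  assumes "\<forall>P\<in>set_pmf p. leaves_ok P"
  shows "measure_pmf.expectation p (\<lambda>P. run P x y) = measure_pmf.expectation p (\<lambda>P. max (-1) (min 1 (run P x y)))"
proof (rule integral_cong_AE)
  show "AE P in measure_pmf p. run P x y = max (- 1) (min 1 (run P x y))"
    unfolding AE_measure_pmf_iff
  proof
    fix P assume "P \<in> set_pmf p"
    then have "leaves_ok P" using assms by blast
    then have "\<bar>run P x y\<bar> \<le> 1" by (rule run_bound)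
    then show "run P x y = max (- 1) (min 1 (run P x y))" by (auto simp: abs_le_iff max_def min_def)
  qed
qed simp_all

lemma rand_bound:
  assumes "C \<in> rand_protocols d"
  shows "\<bar>C x y\<bar> \<le> 1"
proof -
  obtain p :: "('a, 'b) proto pmf" where sup: "\<forall>P\<in>set_pmf p. cost P \<le> d \<and> leaves_ok P"
    and C: "C = (\<lambda>x y. measure_pmf.expectation p (\<lambda>P. run P x y))"
    using assms unfolding rand_protocols_def by blast
  have "\<bar>C x y\<bar> = \<bar>measure_pmf.expectation p (\<lambda>P. max (-1) (min 1 (run P x y)))\<bar>"
    unfolding C by (subst expect_clamp) (use sup in blast, rule refl)
  also have "\<dots> \<le> 1"
  proof -
    let ?h = "\<lambda>P. max (-1) (min 1 (run P x y))"
    have int: "integrable (measure_pmf p) ?h"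
      by (rule measure_pmf.integrable_const_bound[where B=1]) auto
    have "measure_pmf.expectation p ?h \<le> 1"
      by (rule measure_pmf.integral_le_const[OF int]) auto
    moreover have "-1 \<le> measure_pmf.expectation p ?h"
      by (rule measure_pmf.integral_ge_const[OF int]) auto
    ultimately show ?thesis by (simp add: abs_le_iff)
  qed
  finally show ?thesis .
qed

lemma rand_zero: "(\<lambda>x y. 0) \<in> rand_protocols d"
  unfolding rand_protocols_def
  by (rule CollectI, rule exI[where x="return_pmf (Leaf 0)"]) auto

lemma rand_mix:
  fixes \<phi> :: "'r \<Rightarrow> 'c \<Rightarrow> 'a" and \<psi> :: "'r \<Rightarrow> 'e \<Rightarrow> 'b"
  assumes R: "finite R" and w: "\<And>r. r \<in> R \<Longrightarrow> 0 \<le> w r" and w1: "(\<Sum>r\<in>R. w r) = 1"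
    and C: "C \<in> rand_protocols d"
  shows "(\<lambda>x y. \<Sum>r\<in>R. w r * C (\<phi> r x) (\<psi> r y)) \<in> rand_protocols d"
proof -
  obtain p :: "('a, 'b) proto pmf" where sup: "\<forall>P\<in>set_pmf p. cost P \<le> d \<and> leaves_ok P"
    and Cp: "C = (\<lambda>x y. measure_pmf.expectation p (\<lambda>P. run P x y))"
    using C unfolding rand_protocols_def by blast
  define f where "f r = (if r \<in> R then w r else 0)" for r
  have fnn: "\<And>r. 0 \<le> f r" using w unfolding f_def by auto
  have fint: "(\<integral>\<^sup>+r. ennreal (f r) \<partial>count_space UNIV) = 1"
  proof -
    have "(\<integral>\<^sup>+r. ennreal (f r) \<partial>count_space UNIV) = (\<Sum>r\<in>R. ennreal (f r))"
      by (rule nn_integral_count_space') (auto simp: R f_def)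
    also have "\<dots> = ennreal (\<Sum>r\<in>R. f r)" using fnn by simp
    also have "(\<Sum>r\<in>R. f r) = 1" using w1 unfolding f_def by simp
    finally show ?thesis by simp
  qed
  define Q where "Q = embed_pmf f"
  have pQ: "pmf Q r = f r" for r unfolding Q_def using pmf_embed_pmf[OF fnn fint] .
  have "set_pmf Q = {r. f r \<noteq> 0}" unfolding Q_def by (rule set_embed_pmf[OF fnn fint])
  then have sQ: "set_pmf Q \<subseteq> R" unfolding f_def by (auto split: if_splits)
  define p' where "p' = bind_pmf Q (\<lambda>r. map_pmf (mapP (\<phi> r) (\<psi> r)) p)"
  have sup': "\<forall>P\<in>set_pmf p'. cost P \<le> d \<and> leaves_ok P"
    using sup unfolding p'_def by auto
  have E: "measure_pmf.expectation p' (\<lambda>P. run P x y) = (\<Sum>r\<in>R. w r * C (\<phi> r x) (\<psi> r y))" for x y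
  proof -
    let ?h = "\<lambda>P. max (-1) (min 1 (run P x y))"
    have "measure_pmf.expectation p' (\<lambda>P. run P x y) = measure_pmf.expectation p' ?h"
      by (rule expect_clamp) (use sup' in blast)
    also have "\<dots> = (\<integral>r. measure_pmf.expectation (map_pmf (mapP (\<phi> r) (\<psi> r)) p) ?h \<partial>measure_pmf Q)"
      unfolding p'_def measure_pmf_bind
    proof (rule integral_bind[where K="count_space UNIV" and B=1 and B'=1])
      show "?h \<in> borel_measurable (count_space UNIV)" by simp
      show "\<And>P. P \<in> space (count_space UNIV) \<Longrightarrow> \<bar>?h P\<bar> \<le> 1" by simp
      show "(\<lambda>r. measure_pmf (map_pmf (mapP (\<phi> r) (\<psi> r)) p)) \<in> measurable (measure_pmf Q) (subprob_algebra (count_space UNIV))"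
        by (subst measurable_cong_sets[OF sets_measure_pmf_count_space refl]) (rule measurable_measure_pmf)
      show "finite_measure (measure_pmf Q)" by (rule measure_pmf.finite_measure_axioms)
      show "AE r in measure_pmf Q. emeasure (measure_pmf (map_pmf (mapP (\<phi> r) (\<psi> r)) p)) (space (measure_pmf (map_pmf (mapP (\<phi> r) (\<psi> r)) p))) \<le> ennreal 1"
        by (simp add: measure_pmf.emeasure_space_1)
    qed
    also have "\<dots> = (\<Sum>r\<in>R. pmf Q r *\<^sub>R measure_pmf.expectation (map_pmf (mapP (\<phi> r) (\<psi> r)) p) ?h)"
      by (rule integral_measure_pmf[OF R]) (use sQ in blast)
    also have "\<dots> = (\<Sum>r\<in>R. w r * C (\<phi> r x) (\<psi> r y))"
    proof (rule sum.cong[OF refl])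
      fix r assume r: "r \<in> R"
      have "measure_pmf.expectation (map_pmf (mapP (\<phi> r) (\<psi> r)) p) ?h
          = measure_pmf.expectation p (\<lambda>P. max (-1) (min 1 (run P (\<phi> r x) (\<psi> r y))))" by simp
      also have "\<dots> = C (\<phi> r x) (\<psi> r y)" unfolding Cp by (rule expect_clamp[symmetric]) (use sup in blast)
      finally show "pmf Q r *\<^sub>R measure_pmf.expectation (map_pmf (mapP (\<phi> r) (\<psi> r)) p) ?h = w r * C (\<phi> r x) (\<psi> r y)"
        using r by (simp add: pQ f_def)
    qed
    finally show ?thesis .
  qed
  have "(\<lambda>x y. \<Sum>r\<in>R. w r * C (\<phi> r x) (\<psi> r y)) = (\<lambda>x y. measure_pmf.expectation p' (\<lambda>P. run P x y))"
    by (intro ext) (rule E[symmetric])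
  note eq = this
  show ?thesis unfolding rand_protocols_def mem_Collect_eq
    using sup' eq by blast
qed




lemma pair_sum:
  fixes H :: "('i \<Rightarrow> 'a) \<Rightarrow> ('i \<Rightarrow> 'b) \<Rightarrow> real"
  assumes K: "finite K" and A: "\<And>i. finite (A i)" and B: "\<And>i. finite (B i)"
  shows "(\<Sum>x\<in>PiE K A. \<Sum>y\<in>PiE K B. H x y)
       = (\<Sum>p\<in>PiE K (\<lambda>i. A i \<times> B i). H (\<lambda>i\<in>K. fst (p i)) (\<lambda>i\<in>K. snd (p i)))"
proof -
  let ?h = "\<lambda>(x, y). (\<lambda>i\<in>K. (x i, y i))"
  let ?k = "\<lambda>p. ((\<lambda>i\<in>K. fst (p i)), (\<lambda>i\<in>K. snd (p i)))"
  have bij: "bij_betw ?k (PiE K (\<lambda>i. A i \<times> B i)) (PiE K A \<times> PiE K B)"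
  proof (rule bij_betw_byWitness[where f'="?h"])
    show "\<forall>p\<in>PiE K (\<lambda>i. A i \<times> B i). ?h (?k p) = p"
    proof
      fix p assume p: "p \<in> PiE K (\<lambda>i. A i \<times> B i)"
      have "?h (?k p) = (\<lambda>i\<in>K. (fst (p i), snd (p i)))"
        by simp (rule restrict_cong, auto)
      also have "\<dots> = (\<lambda>i\<in>K. p i)" by simp
      also have "\<dots> = p" using p by (simp add: PiE_iff extensional_restrict)
      finally show "?h (?k p) = p" .
    qed
    show "\<forall>a\<in>PiE K A \<times> PiE K B. ?k (?h a) = a"
    proof
      fix a assume a: "a \<in> PiE K A \<times> PiE K B"
      obtain x y where a': "a = (x, y)" by (cases a)
      have xe: "x \<in> extensional K" "y \<in> extensional K"
        using a unfolding a' by (auto simp: PiE_iff)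
      have "(\<lambda>i\<in>K. fst ((\<lambda>i\<in>K. (x i, y i)) i)) = (\<lambda>i\<in>K. x i)"
        by (rule restrict_cong) auto
      moreover have "(\<lambda>i\<in>K. snd ((\<lambda>i\<in>K. (x i, y i)) i)) = (\<lambda>i\<in>K. y i)"
        by (rule restrict_cong) auto
      ultimately show "?k (?h a) = a" unfolding a' using xe by (simp add: extensional_restrict)
    qed
    show "?k ` PiE K (\<lambda>i. A i \<times> B i) \<subseteq> PiE K A \<times> PiE K B"
    proof (rule image_subsetI)
      fix p assume p: "p \<in> PiE K (\<lambda>i. A i \<times> B i)"
      have "fst (p i) \<in> A i \<and> snd (p i) \<in> B i" if "i \<in> K" for i
      proof -
        have "p i \<in> A i \<times> B i" using p that by blast
        then show ?thesis by (auto simp: mem_Times_iff)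
      qed
      then show "?k p \<in> PiE K A \<times> PiE K B" by (simp add: restrict_PiE_iff)
    qed
    show "?h ` (PiE K A \<times> PiE K B) \<subseteq> PiE K (\<lambda>i. A i \<times> B i)"
    proof (rule image_subsetI)
      fix a assume a: "a \<in> PiE K A \<times> PiE K B"
      obtain x y where a': "a = (x, y)" by (cases a)
      have "x i \<in> A i \<and> y i \<in> B i" if "i \<in> K" for i
        using a that unfolding a' by (auto simp: PiE_iff)
      then show "?h a \<in> PiE K (\<lambda>i. A i \<times> B i)" unfolding a' by (simp add: restrict_PiE_iff)
    qed
  qed
  have "(\<Sum>x\<in>PiE K A. \<Sum>y\<in>PiE K B. H x y) = (\<Sum>a\<in>PiE K A \<times> PiE K B. H (fst a) (snd a))"
    by (simp add: sum.cartesian_product')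
  also have "\<dots> = (\<Sum>p\<in>PiE K (\<lambda>i. A i \<times> B i). H (fst (?k p)) (snd (?k p)))"
    by (rule sum.reindex_bij_betw[OF bij, symmetric])
  also have "\<dots> = (\<Sum>p\<in>PiE K (\<lambda>i. A i \<times> B i). H (\<lambda>i\<in>K. fst (p i)) (\<lambda>i\<in>K. snd (p i)))"
    by simp
  finally show ?thesis .
qed

lemma push:
  fixes h :: "('i \<Rightarrow> 'b) \<Rightarrow> real" and F :: "'i \<Rightarrow> 'a \<Rightarrow> real"
  assumes K: "finite K" and A: "finite A" and B: "finite B" and f: "f ` A \<subseteq> B"
  shows "(\<Sum>t\<in>PiE K (\<lambda>_. A). h (\<lambda>i\<in>K. f (t i)) * (\<Prod>i\<in>K. F i (t i)))
       = (\<Sum>s\<in>PiE K (\<lambda>_. B). h s * (\<Prod>i\<in>K. \<Sum>a\<in>{a \<in> A. f a = s i}. F i a))"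
proof -
  let ?m = "\<lambda>t. (\<lambda>i\<in>K. f (t i))"
  have img: "?m ` PiE K (\<lambda>_. A) \<subseteq> PiE K (\<lambda>_. B)"
  proof (rule image_subsetI)
    fix t assume "t \<in> PiE K (\<lambda>_. A)"
    then have "f (t i) \<in> B" if "i \<in> K" for i using f that by (auto simp: PiE_iff)
    then show "?m t \<in> PiE K (\<lambda>_. B)" by (simp add: restrict_PiE_iff)
  qed
  have fin1: "finite (PiE K (\<lambda>_. A))" using K A by (simp add: finite_PiE)
  have fin2: "finite (PiE K (\<lambda>_. B))" using K B by (simp add: finite_PiE)
  have "(\<Sum>t\<in>PiE K (\<lambda>_. A). h (?m t) * (\<Prod>i\<in>K. F i (t i)))
      = (\<Sum>s\<in>PiE K (\<lambda>_. B). \<Sum>t\<in>{t \<in> PiE K (\<lambda>_. A). ?m t = s}. h (?m t) * (\<Prod>i\<in>K. F i (t i)))"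
    by (rule sum.group[OF fin1 fin2 img, symmetric])
  also have "\<dots> = (\<Sum>s\<in>PiE K (\<lambda>_. B). h s * (\<Prod>i\<in>K. \<Sum>a\<in>{a \<in> A. f a = s i}. F i a))"
  proof (rule sum.cong[OF refl])
    fix s assume s: "s \<in> PiE K (\<lambda>_. B)"
    have se: "s \<in> extensional K" using s by (simp add: PiE_iff)
    have set: "{t \<in> PiE K (\<lambda>_. A). ?m t = s} = PiE K (\<lambda>i. {a \<in> A. f a = s i})"
    proof (rule set_eqI)
      fix t
      have "(t \<in> PiE K (\<lambda>_. A) \<and> ?m t = s) = ((\<forall>i\<in>K. t i \<in> A) \<and> t \<in> extensional K \<and> (\<forall>i\<in>K. f (t i) = s i))"
        by (simp only: PiE_iff restrict_eq_ext[OF se]) blast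
      also have "\<dots> = (t \<in> PiE K (\<lambda>i. {a \<in> A. f a = s i}))"
        by (simp only: PiE_iff mem_Collect_eq) blast
      finally show "t \<in> {t \<in> PiE K (\<lambda>_. A). ?m t = s} \<longleftrightarrow> t \<in> PiE K (\<lambda>i. {a \<in> A. f a = s i})"
        by simp
    qed
    have "(\<Sum>t\<in>{t \<in> PiE K (\<lambda>_. A). ?m t = s}. h (?m t) * (\<Prod>i\<in>K. F i (t i)))
        = (\<Sum>t\<in>PiE K (\<lambda>i. {a \<in> A. f a = s i}). h s * (\<Prod>i\<in>K. F i (t i)))"
      unfolding set[symmetric] by (rule sum.cong) auto
    also have "\<dots> = h s * (\<Sum>t\<in>PiE K (\<lambda>i. {a \<in> A. f a = s i}). (\<Prod>i\<in>K. F i (t i)))"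
      by (simp add: sum_distrib_left)
    also have "\<dots> = h s * (\<Prod>i\<in>K. \<Sum>a\<in>{a \<in> A. f a = s i}. F i a)"
      using prod_sum_PiE[of K "\<lambda>i. {a \<in> A. f a = s i}" F] K A by simp
    finally show "(\<Sum>t\<in>{t \<in> PiE K (\<lambda>_. A). ?m t = s}. h (?m t) * (\<Prod>i\<in>K. F i (t i)))
        = h s * (\<Prod>i\<in>K. \<Sum>a\<in>{a \<in> A. f a = s i}. F i a)" .
  qed
  finally show ?thesis .
qed




abbreviation chi :: "nat set \<Rightarrow> (nat \<Rightarrow> real) \<Rightarrow> real" where
  "chi S x \<equiv> (\<Prod>j\<in>S. x j)"

lemma chi_pm:
  assumes "x \<in> cube m" "S \<subseteq> {..<m}"
  shows "chi S x = 1 \<or> chi S x = -1"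
proof -
  have fS: "finite S" using assms(2) finite_subset by blast
  have h: "\<forall>j\<in>S. x j = 1 \<or> x j = -1" using assms cube_val by blast
  show ?thesis using fS h
  proof (induction S rule: finite_induct)
    case (insert j S)
    have p: "chi (insert j S) x = x j * chi S x" using insert(1,2) by simp
    have "x j = 1 \<or> x j = -1" using insert(4) by simp
    moreover have "chi S x = 1 \<or> chi S x = -1" using insert(3,4) by simp
    ultimately show ?case unfolding p by (elim disjE) simp_all
  qed simp
qed

definition fixc :: "(nat \<Rightarrow> real) \<Rightarrow> nat set \<Rightarrow> real \<Rightarrow> (nat \<Rightarrow> real)" where
  "fixc u S \<tau> = (if chi S u = \<tau> then u else flipc (Min S) u)"

lemma Min_in_sub:
  fixes m :: nat
  assumes "S \<subseteq> {..<m}" "S \<noteq> {}"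
  shows "Min S \<in> S" "Min S < m"
proof -
  have fS: "finite S" by (rule finite_subset[OF assms(1)]) simp
  show "Min S \<in> S" by (rule Min_in[OF fS assms(2)])
  then show "Min S < m" using assms(1) by blast
qed

lemma fixc_cube:
  assumes "u \<in> cube m" "S \<subseteq> {..<m}" "S \<noteq> {}"
  shows "fixc u S \<tau> \<in> cube m"
  unfolding fixc_def using assms flip_cube Min_in_sub by auto

lemma fixc_count:
  assumes a: "a \<in> cube m" and S: "S \<subseteq> {..<m}" "S \<noteq> {}" and \<tau>: "\<tau> = 1 \<or> \<tau> = -1"
  shows "(\<Sum>u\<in>cube m. if fixc u S \<tau> = a then 1 else 0) = 1 + \<tau> * chi S a"
proof -
  define j where "j = Min S"
  have jS: "j \<in> S" and jm: "j < m" using Min_in_sub[OF S] unfolding j_def by auto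
  have fS: "finite S" by (rule finite_subset[OF S(1)]) simp
  define a' where "a' = flipc j a"
  have a'c: "a' \<in> cube m" unfolding a'_def using flip_cube[OF a jm] .
  have aa': "a \<noteq> a'" unfolding a'_def using flip_neq[OF a jm] by metis
  have ca': "chi S a' = - chi S a" unfolding a'_def using chi_flip[OF fS jS] .
  have pm: "chi S u = 1 \<or> chi S u = -1" if "u \<in> cube m" for u using chi_pm[OF that S(1)] .
  have set: "{u \<in> cube m. fixc u S \<tau> = a} = (if chi S a = \<tau> then {a, a'} else {})"
  proof (cases "chi S a = \<tau>")
    case True
    have "u \<in> cube m \<and> fixc u S \<tau> = a \<longleftrightarrow> u = a \<or> u = a'" for u
    proof
      assume h: "u \<in> cube m \<and> fixc u S \<tau> = a"
      show "u = a \<or> u = a'"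
      proof (cases "chi S u = \<tau>")
        case True then show ?thesis using h by (simp add: fixc_def)
      next
        case False
        then have "flipc j u = a" using h by (simp add: fixc_def j_def)
        then have "u = flipc j a" by (metis flip_flip)
        then show ?thesis by (simp add: a'_def)
      qed
    next
      assume "u = a \<or> u = a'"
      then show "u \<in> cube m \<and> fixc u S \<tau> = a"
      proof
        assume "u = a" then show ?thesis using True a by (simp add: fixc_def)
      next
        assume u: "u = a'"
        have "chi S a' \<noteq> \<tau>" using ca' True \<tau> by auto
        then show ?thesis using u a'c by (simp add: fixc_def j_def[symmetric] a'_def)
      qed
    qed
    then show ?thesis using True by auto
  next
    case False
    have "\<not> (u \<in> cube m \<and> fixc u S \<tau> = a)" for u
    proof
      assume h: "u \<in> cube m \<and> fixc u S \<tau> = a"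
      show False
      proof (cases "chi S u = \<tau>")
        case True then show ?thesis using h False by (simp add: fixc_def)
      next
        case F2: False
        then have "flipc j u = a" using h by (simp add: fixc_def j_def)
        then have "u = a'" unfolding a'_def by (metis flip_flip)
        then have "chi S u = - chi S a" using ca' by simp
        then show False using F2 False pm[of u] pm[OF a] h \<tau> by auto
      qed
    qed
    then show ?thesis using False by auto
  qed
  have "(\<Sum>u\<in>cube m. if fixc u S \<tau> = a then 1 else 0) = real (card {u \<in> cube m. fixc u S \<tau> = a})"
    by (simp add: sum.If_cases[OF cube_finite] Int_def conj_commute)
  also have "\<dots> = 1 + \<tau> * chi S a"
    unfolding set using aa' \<tau> pm[OF a] by auto
  finally show ?thesis .
qed




context
  fixes g g' :: "(nat \<Rightarrow> real) \<Rightarrow> (nat \<Rightarrow> real) \<Rightarrow> real" and m1 m2 m1' m2' :: nat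
    and S' T' :: "nat set"
  assumes gad: "is_gadget g m1 m2" and gad': "is_gadget g' m1' m2'"
    and zero: "\<And>S T. S \<subseteq> {..<m1} \<Longrightarrow> T \<subseteq> {..<m2} \<Longrightarrow> S = {} \<or> T = {} \<Longrightarrow>
           gadget_coeff g m1 m2 S T = 0"
    and zero': "\<And>S T. S \<subseteq> {..<m1'} \<Longrightarrow> T \<subseteq> {..<m2'} \<Longrightarrow> S = {} \<or> T = {} \<Longrightarrow>
           gadget_coeff g' m1' m2' S T = 0"
    and S': "S' \<subseteq> {..<m1'}" "S' \<noteq> {}" and T': "T' \<subseteq> {..<m2'}" "T' \<noteq> {}"
begin

definition "Wt = (\<Sum>S\<in>Pow {..<m1}. \<Sum>T\<in>Pow {..<m2}. \<bar>gadget_coeff g m1 m2 S T\<bar>)"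
definition "STs = {S. S \<subseteq> {..<m1} \<and> S \<noteq> {}} \<times> {T. T \<subseteq> {..<m2} \<and> T \<noteq> {}}"
definition "sg S T = (if 0 \<le> gadget_coeff g m1 m2 S T then 1 else (-1::real))"
definition "Rb = STs \<times> (cube m1 \<times> cube m2)"
definition "wb rb = \<bar>gadget_coeff g m1 m2 (fst (fst rb)) (snd (fst rb))\<bar> / (Wt * 2 ^ m1 * 2 ^ m2)"
definition "phib rb a' = fixc (fst (snd rb)) (fst (fst rb)) (sg (fst (fst rb)) (snd (fst rb)) * chi S' a')"
definition "psib rb b' = fixc (snd (snd rb)) (snd (fst rb)) (chi T' b')"

lemma STs_finite[simp]: "finite STs"
  unfolding STs_def by simp

lemma STs_sub: "STs \<subseteq> Pow {..<m1} \<times> Pow {..<m2}"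
  unfolding STs_def by auto

lemma full_to_STs:
  assumes "\<And>S T. S \<subseteq> {..<m1} \<Longrightarrow> T \<subseteq> {..<m2} \<Longrightarrow> S = {} \<or> T = {} \<Longrightarrow> X S T = 0"
  shows "(\<Sum>S\<in>Pow {..<m1}. \<Sum>T\<in>Pow {..<m2}. X S T) = (\<Sum>st\<in>STs. X (fst st) (snd st))"
proof -
  have "(\<Sum>S\<in>Pow {..<m1}. \<Sum>T\<in>Pow {..<m2}. X S T) = (\<Sum>st\<in>Pow {..<m1} \<times> Pow {..<m2}. X (fst st) (snd st))"
    by (simp add: sum.cartesian_product')
  also have "\<dots> = (\<Sum>st\<in>STs. X (fst st) (snd st))"
  proof (rule sum.mono_neutral_right)
    show "finite (Pow {..<m1} \<times> Pow {..<m2})" by simp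
    show "STs \<subseteq> Pow {..<m1} \<times> Pow {..<m2}" by (rule STs_sub)
    show "\<forall>i\<in>Pow {..<m1} \<times> Pow {..<m2} - STs. X (fst i) (snd i) = 0"
      using assms unfolding STs_def by auto
  qed
  finally show ?thesis .
qed

lemma W_STs: "Wt = (\<Sum>st\<in>STs. \<bar>gadget_coeff g m1 m2 (fst st) (snd st)\<bar>)"
  unfolding Wt_def by (rule full_to_STs) (simp add: zero)

lemma inv_STs:
  assumes "a \<in> cube m1" "b \<in> cube m2"
  shows "(\<Sum>st\<in>STs. gadget_coeff g m1 m2 (fst st) (snd st) * chi (fst st) a * chi (snd st) b) = g a b"
proof -
  have "(\<Sum>st\<in>STs. gadget_coeff g m1 m2 (fst st) (snd st) * chi (fst st) a * chi (snd st) b)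
     = (\<Sum>S\<in>Pow {..<m1}. \<Sum>T\<in>Pow {..<m2}. gadget_coeff g m1 m2 S T * chi S a * chi T b)"
    by (rule full_to_STs[symmetric]) (simp add: zero)
  also have "\<dots> = g a b" by (rule inversion[OF assms])
  finally show ?thesis .
qed

lemma W_pos: "Wt > 0"
proof -
  have nn: "0 \<le> Wt" unfolding Wt_def by (intro sum_nonneg) auto
  obtain a where a: "a \<in> cube m1" using cube_ne by blast
  obtain b where b: "b \<in> cube m2" using cube_ne by blast
  have gab: "g a b \<noteq> 0" using gad a b unfolding is_gadget_def by fastforce
  show ?thesis
  proof (rule ccontr)
    assume "\<not> 0 < Wt"
    then have "Wt = 0" using nn by simp
    then have "\<forall>st\<in>STs. \<bar>gadget_coeff g m1 m2 (fst st) (snd st)\<bar> = 0"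
      unfolding W_STs by (subst (asm) sum_nonneg_eq_0_iff) auto
    then have "(\<Sum>st\<in>STs. gadget_coeff g m1 m2 (fst st) (snd st) * chi (fst st) a * chi (snd st) b) = 0"
      by simp
    then show False using inv_STs[OF a b] gab by simp
  qed
qed

lemma wb_nonneg: "0 \<le> wb rb"
  unfolding wb_def using W_pos by simp

lemma Rb_finite[simp]: "finite Rb"
  unfolding Rb_def by simp

lemma wb_sum: "(\<Sum>rb\<in>Rb. wb rb) = 1"
proof -
  have "(\<Sum>rb\<in>Rb. wb rb) = (\<Sum>st\<in>STs. \<Sum>uv\<in>cube m1 \<times> cube m2. \<bar>gadget_coeff g m1 m2 (fst st) (snd st)\<bar> / (Wt * 2 ^ m1 * 2 ^ m2))"
    unfolding Rb_def wb_def by (simp add: sum.cartesian_product')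
  also have "\<dots> = (\<Sum>st\<in>STs. \<bar>gadget_coeff g m1 m2 (fst st) (snd st)\<bar> / Wt)"
    by (simp add: card_cartesian_product card_cube)
  also have "\<dots> = (\<Sum>st\<in>STs. \<bar>gadget_coeff g m1 m2 (fst st) (snd st)\<bar>) / Wt"
    by (rule sum_divide_distrib[symmetric])
  also have "\<dots> = Wt / Wt" by (simp only: W_STs[symmetric])
  finally show ?thesis using W_pos by simp
qed

lemma sg_pm: "sg S T = 1 \<or> sg S T = -1"
  unfolding sg_def by simp

lemma sg_abs: "\<bar>gadget_coeff g m1 m2 S T\<bar> * sg S T = gadget_coeff g m1 m2 S T"
  unfolding sg_def by simp

lemma kern_st:
  assumes a: "a \<in> cube m1" and b: "b \<in> cube m2" and st: "st \<in> STs"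
  shows "(\<Sum>uv\<in>cube m1 \<times> cube m2. \<Sum>p\<in>cube m1' \<times> cube m2'.
            if (phib (st, uv) (fst p), psib (st, uv) (snd p)) = (a, b) then wb (st, uv) * G (fst p) (snd p) else 0)
       = \<bar>gadget_coeff g m1 m2 (fst st) (snd st)\<bar> / (Wt * 2 ^ m1 * 2 ^ m2) *
          (\<Sum>a'\<in>cube m1'. \<Sum>b'\<in>cube m2'. (1 + sg (fst st) (snd st) * chi S' a' * chi (fst st) a) * (1 + chi T' b' * chi (snd st) b) * G a' b')"
proof -
  obtain S T where stST: "st = (S, T)" by (cases st)
  have S: "S \<subseteq> {..<m1}" "S \<noteq> {}" and T: "T \<subseteq> {..<m2}" "T \<noteq> {}"
    using st unfolding stST STs_def by auto
  define c where "c = \<bar>gadget_coeff g m1 m2 S T\<bar> / (Wt * 2 ^ m1 * 2 ^ m2)"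
  define t1 where "t1 a' = sg S T * chi S' a'" for a'
  define t2 where "t2 b' = chi T' b'" for b'
  have t1: "t1 a' = 1 \<or> t1 a' = -1" if "a' \<in> cube m1'" for a'
    using sg_pm[of S T] chi_pm[OF that S'(1)] unfolding t1_def by auto
  have t2: "t2 b' = 1 \<or> t2 b' = -1" if "b' \<in> cube m2'" for b'
    using chi_pm[OF that T'(1)] unfolding t2_def by auto
  let ?i1 = "\<lambda>u a'. if fixc u S (t1 a') = a then 1 else (0::real)"
  let ?i2 = "\<lambda>v b'. if fixc v T (t2 b') = b then 1 else (0::real)"
  have "(\<Sum>uv\<in>cube m1 \<times> cube m2. \<Sum>p\<in>cube m1' \<times> cube m2'.
            if (phib (st, uv) (fst p), psib (st, uv) (snd p)) = (a, b) then wb (st, uv) * G (fst p) (snd p) else 0)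
      = (\<Sum>u\<in>cube m1. \<Sum>v\<in>cube m2. \<Sum>a'\<in>cube m1'. \<Sum>b'\<in>cube m2'. ?i1 u a' * ?i2 v b' * (c * G a' b'))"
  proof -
    have pt: "(if (phib ((S, T), u, v) a', psib ((S, T), u, v) b') = (a, b) then wb ((S, T), u, v) * G a' b' else 0)
        = ?i1 u a' * ?i2 v b' * (c * G a' b')" for u v a' b'
      by (simp add: phib_def psib_def wb_def c_def t1_def t2_def)
    show ?thesis unfolding stST sum.cartesian_product' fst_conv snd_conv pt by (rule refl)
  qed
  also have "\<dots> = (\<Sum>a'\<in>cube m1'. \<Sum>b'\<in>cube m2'. \<Sum>u\<in>cube m1. \<Sum>v\<in>cube m2. ?i1 u a' * ?i2 v b' * (c * G a' b'))"
    by (rule sum4_swap)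
  also have "\<dots> = (\<Sum>a'\<in>cube m1'. \<Sum>b'\<in>cube m2'. (\<Sum>u\<in>cube m1. ?i1 u a') * (\<Sum>v\<in>cube m2. ?i2 v b') * (c * G a' b'))"
    by (intro sum.cong refl) (simp only: sum_product sum_distrib_right sum_distrib_left, rule sum.swap)
  also have "\<dots> = (\<Sum>a'\<in>cube m1'. \<Sum>b'\<in>cube m2'. (1 + t1 a' * chi S a) * (1 + t2 b' * chi T b) * (c * G a' b'))"
    using fixc_count[OF a S] fixc_count[OF b T] t1 t2 by (intro sum.cong refl) simp
  also have "\<dots> = c * (\<Sum>a'\<in>cube m1'. \<Sum>b'\<in>cube m2'. (1 + t1 a' * chi S a) * (1 + t2 b' * chi T b) * G a' b')"
    by (simp add: sum_distrib_left mult_ac)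
  finally show ?thesis unfolding stST c_def t1_def t2_def by simp
qed

lemma kern_red:
  assumes a: "a \<in> cube m1" and b: "b \<in> cube m2"
  shows "(\<Sum>q\<in>{q \<in> Rb \<times> (cube m1' \<times> cube m2'). (phib (fst q) (fst (snd q)), psib (fst q) (snd (snd q))) = (a, b)}.
            wb (fst q) * G (fst (snd q)) (snd (snd q)))
       = (\<Sum>st\<in>STs. \<bar>gadget_coeff g m1 m2 (fst st) (snd st)\<bar> / (Wt * 2 ^ m1 * 2 ^ m2) *
          (\<Sum>a'\<in>cube m1'. \<Sum>b'\<in>cube m2'. (1 + sg (fst st) (snd st) * chi S' a' * chi (fst st) a) * (1 + chi T' b' * chi (snd st) b) * G a' b'))"
proof -
  have fin: "finite (Rb \<times> (cube m1' \<times> cube m2'))" by simp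
  have "(\<Sum>q\<in>{q \<in> Rb \<times> (cube m1' \<times> cube m2'). (phib (fst q) (fst (snd q)), psib (fst q) (snd (snd q))) = (a, b)}.
            wb (fst q) * G (fst (snd q)) (snd (snd q)))
      = (\<Sum>q\<in>Rb \<times> (cube m1' \<times> cube m2'). if (phib (fst q) (fst (snd q)), psib (fst q) (snd (snd q))) = (a, b) then
            wb (fst q) * G (fst (snd q)) (snd (snd q)) else 0)"
    by (rule sum.inter_filter[OF fin])
  also have "\<dots> = (\<Sum>st\<in>STs. \<Sum>uv\<in>cube m1 \<times> cube m2. \<Sum>p\<in>cube m1' \<times> cube m2'.
            if (phib (st, uv) (fst p), psib (st, uv) (snd p)) = (a, b) then wb (st, uv) * G (fst p) (snd p) else 0)"
    unfolding Rb_def by (simp only: sum.cartesian_product' fst_conv snd_conv)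
  also have "\<dots> = (\<Sum>st\<in>STs. \<bar>gadget_coeff g m1 m2 (fst st) (snd st)\<bar> / (Wt * 2 ^ m1 * 2 ^ m2) *
          (\<Sum>a'\<in>cube m1'. \<Sum>b'\<in>cube m2'. (1 + sg (fst st) (snd st) * chi S' a' * chi (fst st) a) * (1 + chi T' b' * chi (snd st) b) * G a' b'))"
    by (rule sum.cong[OF refl], rule kern_st[OF a b])
  finally show ?thesis .
qed

lemma key':
  "(\<Sum>a'\<in>cube m1'. \<Sum>b'\<in>cube m2'. g' a' b' * chi A a' * chi B b') = 2 ^ m1' * 2 ^ m2' * gadget_coeff g' m1' m2' A B"
  unfolding gadget_coeff_def by simp

lemma D_g':
  "(\<Sum>a'\<in>cube m1'. \<Sum>b'\<in>cube m2'. (1 + \<sigma> * chi S' a' * A) * (1 + chi T' b' * B) * g' a' b')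
     = 2 ^ m1' * 2 ^ m2' * (\<sigma> * A * B * gadget_coeff g' m1' m2' S' T')"
proof -
  let ?N = "(2::real) ^ m1' * 2 ^ m2'"
  have e: "(1 + \<sigma> * chi S' a' * A) * (1 + chi T' b' * B) * g' a' b'
     = g' a' b' * chi {} a' * chi {} b' + (\<sigma> * A) * (g' a' b' * chi S' a' * chi {} b')
       + B * (g' a' b' * chi {} a' * chi T' b') + (\<sigma> * A * B) * (g' a' b' * chi S' a' * chi T' b')" for a' b'
    by (simp add: algebra_simps)
  have "(\<Sum>a'\<in>cube m1'. \<Sum>b'\<in>cube m2'. (1 + \<sigma> * chi S' a' * A) * (1 + chi T' b' * B) * g' a' b')
     = (\<Sum>a'\<in>cube m1'. \<Sum>b'\<in>cube m2'. g' a' b' * chi {} a' * chi {} b' + (\<sigma> * A) * (g' a' b' * chi S' a' * chi {} b')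
       + B * (g' a' b' * chi {} a' * chi T' b') + (\<sigma> * A * B) * (g' a' b' * chi S' a' * chi T' b'))"
    by (simp only: e)
  also have "\<dots> = (\<Sum>a'\<in>cube m1'. \<Sum>b'\<in>cube m2'. g' a' b' * chi {} a' * chi {} b')
      + (\<sigma> * A) * (\<Sum>a'\<in>cube m1'. \<Sum>b'\<in>cube m2'. g' a' b' * chi S' a' * chi {} b')
      + B * (\<Sum>a'\<in>cube m1'. \<Sum>b'\<in>cube m2'. g' a' b' * chi {} a' * chi T' b')
      + (\<sigma> * A * B) * (\<Sum>a'\<in>cube m1'. \<Sum>b'\<in>cube m2'. g' a' b' * chi S' a' * chi T' b')"
    by (simp only: sum.distrib sum_distrib_left)
  also have "\<dots> = ?N * gadget_coeff g' m1' m2' {} {} + (\<sigma> * A) * (?N * gadget_coeff g' m1' m2' S' {})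
      + B * (?N * gadget_coeff g' m1' m2' {} T') + (\<sigma> * A * B) * (?N * gadget_coeff g' m1' m2' S' T')"
    by (simp only: key')
  also have "\<dots> = ?N * (\<sigma> * A * B * gadget_coeff g' m1' m2' S' T')"
    using zero'[of "{}" "{}"] zero'[OF S'(1), of "{}"] zero'[of "{}" T', OF _ T'(1)] by simp
  finally show ?thesis .
qed

lemma D_1:
  "(\<Sum>a'\<in>cube m1'. \<Sum>b'\<in>cube m2'. (1 + \<sigma> * chi S' a' * A) * (1 + chi T' b' * B) * 1)
     = 2 ^ m1' * 2 ^ m2'"
proof -
  have "(\<Sum>a'\<in>cube m1'. \<Sum>b'\<in>cube m2'. (1 + \<sigma> * chi S' a' * A) * (1 + chi T' b' * B) * 1)
      = (\<Sum>a'\<in>cube m1'. \<Sum>b'\<in>cube m2'. (1 + (\<sigma> * A) * chi S' a') * (1 + B * chi T' b'))"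
    by (intro sum.cong refl) (simp add: algebra_simps)
  also have "\<dots> = (\<Sum>a'\<in>cube m1'. 1 + (\<sigma> * A) * chi S' a') * (\<Sum>b'\<in>cube m2'. 1 + B * chi T' b')"
    by (rule sum_product[symmetric])
  also have "\<dots> = (2 ^ m1' + (\<sigma> * A) * (\<Sum>a'\<in>cube m1'. chi S' a')) * (2 ^ m2' + B * (\<Sum>b'\<in>cube m2'. chi T' b'))"
    by (simp add: sum.distrib sum_distrib_left card_cube)
  also have "\<dots> = 2 ^ m1' * 2 ^ m2'"
    using sum_chi_zero[OF S'] sum_chi_zero[OF T'] by simp
  finally show ?thesis .
qed

definition "kap = ((2::real) ^ m1' * 2 ^ m2') / (2 ^ m1 * 2 ^ m2)"

lemma kern_g':
  assumes a: "a \<in> cube m1" and b: "b \<in> cube m2"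
  shows "(\<Sum>q\<in>{q \<in> Rb \<times> (cube m1' \<times> cube m2'). (phib (fst q) (fst (snd q)), psib (fst q) (snd (snd q))) = (a, b)}.
            wb (fst q) * g' (fst (snd q)) (snd (snd q)))
       = kap * (gadget_coeff g' m1' m2' S' T' / Wt) * g a b"
proof -
  let ?N = "(2::real) ^ m1 * 2 ^ m2"
  let ?N' = "(2::real) ^ m1' * 2 ^ m2'"
  let ?c = "gadget_coeff g' m1' m2' S' T'"
  have pt: "\<bar>gadget_coeff g m1 m2 S T\<bar> / (Wt * ?N) * (?N' * (sg S T * A * B * ?c))
      = kap * (?c / Wt) * (gadget_coeff g m1 m2 S T * A * B)" for S T A B
  proof -
    have "\<bar>gadget_coeff g m1 m2 S T\<bar> / (Wt * ?N) * (?N' * (sg S T * A * B * ?c))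
        = kap * (?c / Wt) * ((\<bar>gadget_coeff g m1 m2 S T\<bar> * sg S T) * A * B)"
      unfolding kap_def using W_pos by (simp add: field_simps)
    then show ?thesis by (simp only: sg_abs)
  qed
  have "(\<Sum>q\<in>{q \<in> Rb \<times> (cube m1' \<times> cube m2'). (phib (fst q) (fst (snd q)), psib (fst q) (snd (snd q))) = (a, b)}.
            wb (fst q) * g' (fst (snd q)) (snd (snd q)))
     = (\<Sum>st\<in>STs. \<bar>gadget_coeff g m1 m2 (fst st) (snd st)\<bar> / (Wt * 2 ^ m1 * 2 ^ m2) *
          (?N' * (sg (fst st) (snd st) * chi (fst st) a * chi (snd st) b * ?c)))"
    unfolding kern_red[OF a b] D_g' by (rule refl)
  also have "\<dots> = (\<Sum>st\<in>STs. kap * (?c / Wt) * (gadget_coeff g m1 m2 (fst st) (snd st) * chi (fst st) a * chi (snd st) b))"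
    using pt by (simp add: mult.assoc)
  also have "\<dots> = kap * (?c / Wt) * g a b"
    by (simp only: sum_distrib_left[symmetric] inv_STs[OF a b])
  finally show ?thesis .
qed

lemma kern_1:
  assumes a: "a \<in> cube m1" and b: "b \<in> cube m2"
  shows "(\<Sum>q\<in>{q \<in> Rb \<times> (cube m1' \<times> cube m2'). (phib (fst q) (fst (snd q)), psib (fst q) (snd (snd q))) = (a, b)}.
            wb (fst q) * 1)
       = kap"
proof -
  let ?N' = "(2::real) ^ m1' * 2 ^ m2'"
  have "(\<Sum>q\<in>{q \<in> Rb \<times> (cube m1' \<times> cube m2'). (phib (fst q) (fst (snd q)), psib (fst q) (snd (snd q))) = (a, b)}.
            wb (fst q) * 1)
     = (\<Sum>st\<in>STs. \<bar>gadget_coeff g m1 m2 (fst st) (snd st)\<bar> / (Wt * 2 ^ m1 * 2 ^ m2) * ?N')"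
    using kern_red[OF a b, of "\<lambda>_ _. 1"] D_1 by simp
  also have "\<dots> = (\<Sum>st\<in>STs. \<bar>gadget_coeff g m1 m2 (fst st) (snd st)\<bar> * (kap / Wt))"
    unfolding kap_def using W_pos by (intro sum.cong refl) (simp add: field_simps)
  also have "\<dots> = (\<Sum>st\<in>STs. \<bar>gadget_coeff g m1 m2 (fst st) (snd st)\<bar>) * (kap / Wt)"
    by (rule sum_distrib_right[symmetric])
  also have "\<dots> = kap" using W_pos by (simp add: W_STs[symmetric])
  finally show ?thesis .
qed

lemma phib_cube: "rb \<in> Rb \<Longrightarrow> phib rb a' \<in> cube m1"
  unfolding phib_def Rb_def STs_def by (rule fixc_cube) auto

lemma psib_cube: "rb \<in> Rb \<Longrightarrow> psib rb b' \<in> cube m2"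
  unfolding psib_def Rb_def STs_def by (rule fixc_cube) auto

definition "wR (n::nat) r = (\<Prod>i<n. wb (r i))"
definition "Phi (n::nat) r x' = (\<lambda>i\<in>{..<n}. phib (r i) (x' i))"
definition "Psi (n::nat) r y' = (\<lambda>i\<in>{..<n}. psib (r i) (y' i))"
definition "Clift n C x' y' = (\<Sum>r\<in>PiE {..<n} (\<lambda>_. Rb). wR n r * C (Phi n r x') (Psi n r y'))"

lemma lift:
  fixes C :: "(nat \<Rightarrow> nat \<Rightarrow> real) \<Rightarrow> (nat \<Rightarrow> nat \<Rightarrow> real) \<Rightarrow> real"
  assumes I: "I \<subseteq> {..<n}"
  shows "(\<Sum>x'\<in>blocks n m1'. \<Sum>y'\<in>blocks n m2'. Clift n C x' y' * (\<Prod>i\<in>I. g' (x' i) (y' i)))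
    = kap ^ n * (gadget_coeff g' m1' m2' S' T' / Wt) ^ card I *
      (\<Sum>x\<in>blocks n m1. \<Sum>y\<in>blocks n m2. C x y * (\<Prod>i\<in>I. g (x i) (y i)))"
proof -
  let ?K = "{..<n}"
  let ?A' = "cube m1' \<times> cube m2'"
  let ?R = "PiE ?K (\<lambda>_. Rb)"
  let ?Gp = "\<lambda>x' y'. \<Prod>i\<in>I. g' (x' i) (y' i)"
  let ?H = "\<lambda>r x' y'. wR n r * C (Phi n r x') (Psi n r y') * ?Gp x' y'"
  let ?f = "\<lambda>q. (phib (fst q) (fst (snd q)), psib (fst q) (snd (snd q)))"
  let ?F = "\<lambda>i q. wb (fst q) * (if i \<in> I then g' (fst (snd q)) (snd (snd q)) else 1)"
  let ?h = "\<lambda>s. C (\<lambda>i\<in>?K. fst (s i)) (\<lambda>i\<in>?K. snd (s i))"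
  let ?c = "gadget_coeff g' m1' m2' S' T'"
  have s1: "(\<Sum>x'\<in>blocks n m1'. \<Sum>y'\<in>blocks n m2'. Clift n C x' y' * ?Gp x' y')
      = (\<Sum>r\<in>?R. \<Sum>x'\<in>blocks n m1'. \<Sum>y'\<in>blocks n m2'. ?H r x' y')"
  proof -
    have "(\<Sum>x'\<in>blocks n m1'. \<Sum>y'\<in>blocks n m2'. Clift n C x' y' * ?Gp x' y')
        = (\<Sum>x'\<in>blocks n m1'. \<Sum>y'\<in>blocks n m2'. \<Sum>r\<in>?R. ?H r x' y')"
      unfolding Clift_def by (simp add: sum_distrib_right)
    also have "\<dots> = (\<Sum>x'\<in>blocks n m1'. \<Sum>r\<in>?R. \<Sum>y'\<in>blocks n m2'. ?H r x' y')"
      by (intro sum.cong refl) (rule sum.swap)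
    also have "\<dots> = (\<Sum>r\<in>?R. \<Sum>x'\<in>blocks n m1'. \<Sum>y'\<in>blocks n m2'. ?H r x' y')"
      by (rule sum.swap)
    finally show ?thesis .
  qed
  have s2: "(\<Sum>r\<in>?R. \<Sum>x'\<in>blocks n m1'. \<Sum>y'\<in>blocks n m2'. ?H r x' y')
      = (\<Sum>r\<in>?R. \<Sum>p\<in>PiE ?K (\<lambda>_. ?A'). ?H r (\<lambda>i\<in>?K. fst (p i)) (\<lambda>i\<in>?K. snd (p i)))"
    unfolding blocks_def by (intro sum.cong refl) (rule pair_sum, auto)
  have s3: "(\<Sum>r\<in>?R. \<Sum>p\<in>PiE ?K (\<lambda>_. ?A'). ?H r (\<lambda>i\<in>?K. fst (p i)) (\<lambda>i\<in>?K. snd (p i)))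
      = (\<Sum>q\<in>PiE ?K (\<lambda>_. Rb \<times> ?A'). ?H (\<lambda>i\<in>?K. fst (q i))
            (\<lambda>i\<in>?K. fst ((\<lambda>i\<in>?K. snd (q i)) i)) (\<lambda>i\<in>?K. snd ((\<lambda>i\<in>?K. snd (q i)) i)))"
    by (rule pair_sum[where H="\<lambda>r p. ?H r (\<lambda>i\<in>?K. fst (p i)) (\<lambda>i\<in>?K. snd (p i))"]) auto
  have s4: "(\<Sum>q\<in>PiE ?K (\<lambda>_. Rb \<times> ?A'). ?H (\<lambda>i\<in>?K. fst (q i))
            (\<lambda>i\<in>?K. fst ((\<lambda>i\<in>?K. snd (q i)) i)) (\<lambda>i\<in>?K. snd ((\<lambda>i\<in>?K. snd (q i)) i)))
      = (\<Sum>q\<in>PiE ?K (\<lambda>_. Rb \<times> ?A'). ?h (\<lambda>i\<in>?K. ?f (q i)) * (\<Prod>i\<in>?K. ?F i (q i)))"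
  proof (rule sum.cong[OF refl])
    fix q assume q: "q \<in> PiE ?K (\<lambda>_. Rb \<times> ?A')"
    have w: "wR n (\<lambda>i\<in>?K. fst (q i)) = (\<Prod>i\<in>?K. wb (fst (q i)))"
      unfolding wR_def by (rule prod.cong) auto
    have ph: "Phi n (\<lambda>i\<in>?K. fst (q i)) (\<lambda>i\<in>?K. fst ((\<lambda>i\<in>?K. snd (q i)) i))
        = (\<lambda>i\<in>?K. fst ((\<lambda>i\<in>?K. ?f (q i)) i))"
      unfolding Phi_def by (rule restrict_cong) auto
    have ps: "Psi n (\<lambda>i\<in>?K. fst (q i)) (\<lambda>i\<in>?K. snd ((\<lambda>i\<in>?K. snd (q i)) i))
        = (\<lambda>i\<in>?K. snd ((\<lambda>i\<in>?K. ?f (q i)) i))"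
      unfolding Psi_def by (rule restrict_cong) auto
    have gp: "?Gp (\<lambda>i\<in>?K. fst ((\<lambda>i\<in>?K. snd (q i)) i)) (\<lambda>i\<in>?K. snd ((\<lambda>i\<in>?K. snd (q i)) i))
        = (\<Prod>i\<in>?K. if i \<in> I then g' (fst (snd (q i))) (snd (snd (q i))) else 1)"
    proof -
      have "?Gp (\<lambda>i\<in>?K. fst ((\<lambda>i\<in>?K. snd (q i)) i)) (\<lambda>i\<in>?K. snd ((\<lambda>i\<in>?K. snd (q i)) i))
          = (\<Prod>i\<in>?K \<inter> I. g' (fst (snd (q i))) (snd (snd (q i))))"
        using I by (intro prod.cong) auto
      also have "\<dots> = (\<Prod>i\<in>?K. if i \<in> I then g' (fst (snd (q i))) (snd (snd (q i))) else 1)"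
        by (rule prod.inter_restrict) simp
      finally show ?thesis .
    qed
    have pf: "(\<Prod>i\<in>?K. ?F i (q i)) = (\<Prod>i\<in>?K. wb (fst (q i))) * (\<Prod>i\<in>?K. if i \<in> I then g' (fst (snd (q i))) (snd (snd (q i))) else 1)"
      by (rule prod.distrib)
    show "?H (\<lambda>i\<in>?K. fst (q i)) (\<lambda>i\<in>?K. fst ((\<lambda>i\<in>?K. snd (q i)) i)) (\<lambda>i\<in>?K. snd ((\<lambda>i\<in>?K. snd (q i)) i))
        = ?h (\<lambda>i\<in>?K. ?f (q i)) * (\<Prod>i\<in>?K. ?F i (q i))"
      unfolding w ph ps gp pf by (simp only: mult_ac)
  qed
  have img: "?f ` (Rb \<times> ?A') \<subseteq> cube m1 \<times> cube m2"
    using phib_cube psib_cube by auto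
  have s5: "(\<Sum>q\<in>PiE ?K (\<lambda>_. Rb \<times> ?A'). ?h (\<lambda>i\<in>?K. ?f (q i)) * (\<Prod>i\<in>?K. ?F i (q i)))
      = (\<Sum>s\<in>PiE ?K (\<lambda>_. cube m1 \<times> cube m2). ?h s * (\<Prod>i\<in>?K. \<Sum>a\<in>{a \<in> Rb \<times> ?A'. ?f a = s i}. ?F i a))"
    by (rule push[OF _ _ _ img]) simp_all
  have s6: "(\<Sum>s\<in>PiE ?K (\<lambda>_. cube m1 \<times> cube m2). ?h s * (\<Prod>i\<in>?K. \<Sum>a\<in>{a \<in> Rb \<times> ?A'. ?f a = s i}. ?F i a))
      = (\<Sum>s\<in>PiE ?K (\<lambda>_. cube m1 \<times> cube m2). ?h s * (kap ^ n * (?c / Wt) ^ card I * (\<Prod>i\<in>I. g (fst (s i)) (snd (s i)))))"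
  proof (rule sum.cong[OF refl])
    fix s assume s: "s \<in> PiE ?K (\<lambda>_. cube m1 \<times> cube m2)"
    have ki: "(\<Sum>a\<in>{a \<in> Rb \<times> ?A'. ?f a = s i}. ?F i a) = kap * (if i \<in> I then (?c / Wt) * g (fst (s i)) (snd (s i)) else 1)"
      if i: "i \<in> ?K" for i
    proof -
      have si: "fst (s i) \<in> cube m1" "snd (s i) \<in> cube m2" using s i by (auto simp: PiE_iff mem_Times_iff)
      have seq: "s i = (fst (s i), snd (s i))" by simp
      show ?thesis
      proof (cases "i \<in> I")
        case True
        then have "(\<Sum>a\<in>{a \<in> Rb \<times> ?A'. ?f a = s i}. ?F i a)
            = (\<Sum>a\<in>{a \<in> Rb \<times> ?A'. ?f a = (fst (s i), snd (s i))}. wb (fst a) * g' (fst (snd a)) (snd (snd a)))"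
          by (subst seq) simp
        also have "\<dots> = kap * (?c / Wt) * g (fst (s i)) (snd (s i))" by (rule kern_g'[OF si])
        finally show ?thesis using True by simp
      next
        case False
        then have "(\<Sum>a\<in>{a \<in> Rb \<times> ?A'. ?f a = s i}. ?F i a)
            = (\<Sum>a\<in>{a \<in> Rb \<times> ?A'. ?f a = (fst (s i), snd (s i))}. wb (fst a) * 1)"
          by (subst seq) simp
        also have "\<dots> = kap" by (rule kern_1[OF si])
        finally show ?thesis using False by simp
      qed
    qed
    have "(\<Prod>i\<in>?K. \<Sum>a\<in>{a \<in> Rb \<times> ?A'. ?f a = s i}. ?F i a)
        = (\<Prod>i\<in>?K. kap * (if i \<in> I then (?c / Wt) * g (fst (s i)) (snd (s i)) else 1))"
      by (rule prod.cong[OF refl]) (rule ki)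
    also have "\<dots> = kap ^ n * (\<Prod>i\<in>?K. if i \<in> I then (?c / Wt) * g (fst (s i)) (snd (s i)) else 1)"
      by (simp add: prod.distrib)
    also have "(\<Prod>i\<in>?K. if i \<in> I then (?c / Wt) * g (fst (s i)) (snd (s i)) else 1)
        = (\<Prod>i\<in>?K \<inter> I. (?c / Wt) * g (fst (s i)) (snd (s i)))"
      by (rule prod.inter_restrict[symmetric]) simp
    also have "?K \<inter> I = I" using I by auto
    also have "(\<Prod>i\<in>I. (?c / Wt) * g (fst (s i)) (snd (s i))) = (?c / Wt) ^ card I * (\<Prod>i\<in>I. g (fst (s i)) (snd (s i)))"
      by (simp only: prod.distrib prod_constant)
    finally show "?h s * (\<Prod>i\<in>?K. \<Sum>a\<in>{a \<in> Rb \<times> ?A'. ?f a = s i}. ?F i a)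
        = ?h s * (kap ^ n * (?c / Wt) ^ card I * (\<Prod>i\<in>I. g (fst (s i)) (snd (s i))))"
      by (simp only: mult.assoc)
  qed
  have s7: "(\<Sum>s\<in>PiE ?K (\<lambda>_. cube m1 \<times> cube m2). ?h s * (kap ^ n * (?c / Wt) ^ card I * (\<Prod>i\<in>I. g (fst (s i)) (snd (s i)))))
      = kap ^ n * (?c / Wt) ^ card I * (\<Sum>s\<in>PiE ?K (\<lambda>_. cube m1 \<times> cube m2). ?h s * (\<Prod>i\<in>I. g (fst (s i)) (snd (s i))))"
    by (simp add: sum_distrib_left mult_ac)
  have s8: "(\<Sum>x\<in>blocks n m1. \<Sum>y\<in>blocks n m2. C x y * (\<Prod>i\<in>I. g (x i) (y i)))
      = (\<Sum>s\<in>PiE ?K (\<lambda>_. cube m1 \<times> cube m2). ?h s * (\<Prod>i\<in>I. g (fst (s i)) (snd (s i))))"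
  proof -
    have "(\<Sum>x\<in>blocks n m1. \<Sum>y\<in>blocks n m2. C x y * (\<Prod>i\<in>I. g (x i) (y i)))
        = (\<Sum>s\<in>PiE ?K (\<lambda>_. cube m1 \<times> cube m2). ?h s * (\<Prod>i\<in>I. g ((\<lambda>i\<in>?K. fst (s i)) i) ((\<lambda>i\<in>?K. snd (s i)) i)))"
      unfolding blocks_def by (rule pair_sum) auto
    also have "\<dots> = (\<Sum>s\<in>PiE ?K (\<lambda>_. cube m1 \<times> cube m2). ?h s * (\<Prod>i\<in>I. g (fst (s i)) (snd (s i))))"
      using I by (intro sum.cong refl arg_cong2[where f="(*)"] prod.cong) auto
    finally show ?thesis .
  qed
  show ?thesis using s1 s2 s3 s4 s5 s6 s7 s8 by simp
qed

lemma wR_sum: "(\<Sum>r\<in>PiE {..<n} (\<lambda>_. Rb). wR n r) = 1"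
proof -
  have "(\<Sum>r\<in>PiE {..<n} (\<lambda>_. Rb). wR n r) = (\<Prod>i<n. \<Sum>rb\<in>Rb. wb rb)"
    unfolding wR_def by (rule prod_sum_PiE[symmetric]) auto
  then show ?thesis by (simp add: wb_sum)
qed

lemma wR_nonneg: "0 \<le> wR n r"
  unfolding wR_def by (intro prod_nonneg) (simp add: wb_nonneg)

lemma Clift_rand:
  assumes "C \<in> rand_protocols d"
  shows "Clift n C \<in> rand_protocols d"
  unfolding Clift_def[abs_def]
  by (rule rand_mix[where R="PiE {..<n} (\<lambda>_. Rb)" and w="wR n" and \<phi>="Phi n" and \<psi>="Psi n", OF _ _ _ assms])
     (auto simp: wR_nonneg wR_sum intro: finite_PiE)

lemma W_pos': "0 < (\<Sum>S\<in>Pow {..<m1}. \<Sum>T\<in>Pow {..<m2}. \<bar>gadget_coeff g m1 m2 S T\<bar>)"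
  using W_pos unfolding Wt_def .

lemma exists_lift:
  assumes C: "C \<in> rand_protocols d"
  shows "\<exists>C'\<in>rand_protocols d. L1k n k (fiber g' m1' m2' n C')
     = (\<bar>gadget_coeff g' m1' m2' S' T'\<bar> / (\<Sum>S\<in>Pow {..<m1}. \<Sum>T\<in>Pow {..<m2}. \<bar>gadget_coeff g m1 m2 S T\<bar>)) ^ k
       * L1k n k (fiber g m1 m2 n C)"
proof (intro bexI[of _ "Clift n C"])
  show "Clift n C \<in> rand_protocols d" by (rule Clift_rand[OF C])
  let ?c = "gadget_coeff g' m1' m2' S' T'"
  have bal: "gadget_coeff g m1 m2 {} {} = 0" by (rule zero) auto
  have bal': "gadget_coeff g' m1' m2' {} {} = 0" by (rule zero') auto
  have fI: "fourier n (fiber g' m1' m2' n (Clift n C)) I = (?c / Wt) ^ k * fourier n (fiber g m1 m2 n C) I"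
    if I: "I \<in> {I. I \<subseteq> {..<n} \<and> card I = k}" for I
  proof -
    have Isub: "I \<subseteq> {..<n}" and Ik: "card I = k" using I by auto
    have "fourier n (fiber g' m1' m2' n (Clift n C)) I
        = (\<Sum>x\<in>blocks n m1'. \<Sum>y\<in>blocks n m2'. Clift n C x y * (\<Prod>i\<in>I. g' (x i) (y i))) / ((2 ^ m1' * 2 ^ m2') ^ n)"
      by (rule fiber_fourier[OF gad' bal' Isub])
    also have "\<dots> = kap ^ n * (?c / Wt) ^ k * (\<Sum>x\<in>blocks n m1. \<Sum>y\<in>blocks n m2. C x y * (\<Prod>i\<in>I. g (x i) (y i))) / ((2 ^ m1' * 2 ^ m2') ^ n)"
      unfolding lift[OF Isub] Ik by (rule refl)
    also have "\<dots> = (?c / Wt) ^ k * ((\<Sum>x\<in>blocks n m1. \<Sum>y\<in>blocks n m2. C x y * (\<Prod>i\<in>I. g (x i) (y i))) / ((2 ^ m1 * 2 ^ m2) ^ n))"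
      unfolding kap_def by (simp add: power_divide field_simps)
    also have "\<dots> = (?c / Wt) ^ k * fourier n (fiber g m1 m2 n C) I"
      by (simp only: fiber_fourier[OF gad bal Isub])
    finally show ?thesis .
  qed
  have "L1k n k (fiber g' m1' m2' n (Clift n C)) = (\<Sum>I\<in>{I. I \<subseteq> {..<n} \<and> card I = k}. \<bar>(?c / Wt) ^ k * fourier n (fiber g m1 m2 n C) I\<bar>)"
    unfolding L1k_def by (rule sum.cong[OF refl]) (simp only: fI)
  also have "\<dots> = (\<bar>?c\<bar> / Wt) ^ k * L1k n k (fiber g m1 m2 n C)"
    unfolding L1k_def using W_pos by (simp add: abs_mult power_abs sum_distrib_left)
  finally show "L1k n k (fiber g' m1' m2' n (Clift n C))
     = (\<bar>?c\<bar> / (\<Sum>S\<in>Pow {..<m1}. \<Sum>T\<in>Pow {..<m2}. \<bar>gadget_coeff g m1 m2 S T\<bar>)) ^ k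
       * L1k n k (fiber g m1 m2 n C)" unfolding Wt_def .
qed

end




lemma fiber_bound:
  assumes "\<And>x y. \<bar>C x y\<bar> \<le> 1"
  shows "\<bar>fiber g m1 m2 n C z\<bar> \<le> 1"
proof -
  define E where "E = {(x, y). x \<in> blocks n m1 \<and> y \<in> blocks n m2 \<and> (\<forall>i<n. g (x i) (y i) = z i)}"
  have "\<bar>\<Sum>p\<in>E. case_prod C p\<bar> \<le> (\<Sum>p\<in>E. \<bar>case_prod C p\<bar>)" by (rule sum_abs)
  also have "\<dots> \<le> of_nat (card E) * 1"
  proof (rule sum_bounded_above)
    fix p :: "(nat \<Rightarrow> nat \<Rightarrow> real) \<times> (nat \<Rightarrow> nat \<Rightarrow> real)"
    obtain x y where "p = (x, y)" by (cases p)
    then show "\<bar>case_prod C p\<bar> \<le> 1" using assms[of x y] by simp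
  qed
  finally have h: "\<bar>\<Sum>p\<in>E. case_prod C p\<bar> \<le> real (card E)" by (simp only: mult_1_right)
  have "fiber g m1 m2 n C z = (\<Sum>p\<in>E. case_prod C p) / real (card E)"
    unfolding fiber_def E_def Let_def by (rule refl)
  also have "\<bar>\<dots>\<bar> \<le> 1"
  proof (cases "card E = 0")
    case True then show ?thesis by simp
  next
    case False
    then have c: "0 < real (card E)" by simp
    have "\<bar>(\<Sum>p\<in>E. case_prod C p) / real (card E)\<bar> = \<bar>\<Sum>p\<in>E. case_prod C p\<bar> / real (card E)"
      using c by (simp only: abs_divide abs_of_pos)
    also have "\<dots> \<le> 1" using h c by (simp only: divide_le_eq_1_pos)
    finally show ?thesis .
  qed
  finally show ?thesis .
qed

lemma fourier_bound:
  assumes f: "\<And>z. z \<in> cube n \<Longrightarrow> \<bar>f z\<bar> \<le> 1" and I: "I \<subseteq> {..<n}"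
  shows "\<bar>fourier n f I\<bar> \<le> 1"
proof -
  have "\<bar>\<Sum>z\<in>cube n. f z * chi I z\<bar> \<le> (\<Sum>z\<in>cube n. \<bar>f z * chi I z\<bar>)" by (rule sum_abs)
  also have "\<dots> \<le> of_nat (card (cube n)) * 1"
  proof (rule sum_bounded_above)
    fix z assume z: "z \<in> cube n"
    have "\<bar>chi I z\<bar> = 1" using chi_pm[OF z I] by auto
    then show "\<bar>f z * chi I z\<bar> \<le> 1" using f[OF z] by (simp add: abs_mult)
  qed
  finally have h: "\<bar>\<Sum>z\<in>cube n. f z * chi I z\<bar> \<le> 2 ^ n" by (simp add: card_cube)
  have c: "(0::real) < 2 ^ n" by simp
  have "\<bar>fourier n f I\<bar> = \<bar>\<Sum>z\<in>cube n. f z * chi I z\<bar> / 2 ^ n"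
    unfolding fourier_def using c by (simp only: abs_divide abs_of_pos)
  also have "\<dots> \<le> 1" using h c by (simp only: divide_le_eq_1_pos)
  finally show ?thesis .
qed

lemma L1k_fiber_bound:
  assumes "C \<in> rand_protocols d"
  shows "L1k n k (fiber g m1 m2 n C) \<le> real (card {I. I \<subseteq> {..<n} \<and> card I = k})"
proof -
  have "L1k n k (fiber g m1 m2 n C) \<le> of_nat (card {I. I \<subseteq> {..<n} \<and> card I = k}) * 1"
    unfolding L1k_def
  proof (rule sum_bounded_above)
    fix I assume "I \<in> {I. I \<subseteq> {..<n} \<and> card I = k}"
    then have I: "I \<subseteq> {..<n}" by simp
    show "\<bar>fourier n (fiber g m1 m2 n C) I\<bar> \<le> 1"
      by (rule fourier_bound[OF _ I], rule fiber_bound, rule rand_bound[OF assms])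
  qed
  then show ?thesis by simp
qed

lemma L1k_nonneg: "0 \<le> L1k n k f"
  unfolding L1k_def by (intro sum_nonneg) simp

theorem corollary7p7:
  fixes g g' :: "(nat \<Rightarrow> real) \<Rightarrow> (nat \<Rightarrow> real) \<Rightarrow> real"
    and m1 m2 m1' m2' k d n :: nat
  assumes "is_gadget g m1 m2" and "is_gadget g' m1' m2'"
    and "\<And>S T. S \<subseteq> {..<m1} \<Longrightarrow> T \<subseteq> {..<m2} \<Longrightarrow> S = {} \<or> T = {} \<Longrightarrow>
           gadget_coeff g m1 m2 S T = 0"
    and "\<And>S T. S \<subseteq> {..<m1'} \<Longrightarrow> T \<subseteq> {..<m2'} \<Longrightarrow> S = {} \<or> T = {} \<Longrightarrow>
           gadget_coeff g' m1' m2' S T = 0"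
  shows "L1k_gadget k g d m1 m2 n
           \<le> 2 powr (real (m1 + m2 + m1' + m2') * real k / 2) * L1k_gadget k g' d m1' m2' n"
proof -
  let ?P = "Pow {..<m1'} \<times> Pow {..<m2'}"
  let ?Qs = "Pow {..<m1} \<times> Pow {..<m2}"
  let ?a = "\<lambda>st. \<bar>gadget_coeff g' m1' m2' (fst st) (snd st)\<bar>"
  have finP: "finite ?P" by simp
  have neP: "?P \<noteq> {}" by auto
  have "Max (?a ` ?P) \<in> ?a ` ?P" by (rule Max_in) (use finP neP in simp_all)
  then obtain st' where st': "st' \<in> ?P" "?a st' = Max (?a ` ?P)"
    by (metis (no_types, lifting) imageE)
  have maxa: "?a st \<le> ?a st'" if "st \<in> ?P" for st
    using st'(2) Max_ge[of "?a ` ?P"] finP that by simp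
  define S' where "S' = fst st'"
  define T' where "T' = snd st'"
  define c where "c = gadget_coeff g' m1' m2' S' T'"
  have S'sub: "S' \<subseteq> {..<m1'}" and T'sub: "T' \<subseteq> {..<m2'}" using st'(1) unfolding S'_def T'_def by auto
  have "1 = (\<Sum>S\<in>Pow {..<m1'}. \<Sum>T\<in>Pow {..<m2'}. (gadget_coeff g' m1' m2' S T)\<^sup>2)"
    using parseval[OF assms(2)] by simp
  also have "\<dots> = (\<Sum>st\<in>?P. (gadget_coeff g' m1' m2' (fst st) (snd st))\<^sup>2)"
    by (simp add: sum.cartesian_product')
  also have "\<dots> \<le> (\<Sum>st\<in>?P. c\<^sup>2)"
  proof (rule sum_mono)
    fix st assume "st \<in> ?P"
    then have "\<bar>gadget_coeff g' m1' m2' (fst st) (snd st)\<bar> \<le> \<bar>c\<bar>"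
      using maxa unfolding c_def S'_def T'_def by blast
    then show "(gadget_coeff g' m1' m2' (fst st) (snd st))\<^sup>2 \<le> c\<^sup>2"
      by (simp add: abs_le_square_iff)
  qed
  also have "\<dots> = 2 ^ m1' * 2 ^ m2' * c\<^sup>2"
    by (simp add: card_cartesian_product card_Pow)
  finally have c2: "1 \<le> 2 ^ m1' * 2 ^ m2' * c\<^sup>2" .
  have c0: "c \<noteq> 0" using c2 by auto
  have S'ne: "S' \<noteq> {}" and T'ne: "T' \<noteq> {}"
    using c0 assms(4)[OF S'sub T'sub] unfolding c_def by auto
  define W where "W = (\<Sum>S\<in>Pow {..<m1}. \<Sum>T\<in>Pow {..<m2}. \<bar>gadget_coeff g m1 m2 S T\<bar>)"
  have Wpos: "0 < W" unfolding W_def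
    by (rule W_pos'[OF assms(1,2) assms(3) assms(4) S'sub S'ne T'sub T'ne])
  have "W\<^sup>2 = (\<Sum>st\<in>?Qs. 1 * \<bar>gadget_coeff g m1 m2 (fst st) (snd st)\<bar>)\<^sup>2"
    unfolding W_def by (simp add: sum.cartesian_product')
  also have "\<dots> \<le> (\<Sum>st\<in>?Qs. 1\<^sup>2) * (\<Sum>st\<in>?Qs. \<bar>gadget_coeff g m1 m2 (fst st) (snd st)\<bar>\<^sup>2)"
    by (rule Cauchy_Schwarz_ineq_sum)
  also have "(\<Sum>st\<in>?Qs. \<bar>gadget_coeff g m1 m2 (fst st) (snd st)\<bar>\<^sup>2) = 1"
    using parseval[OF assms(1)] by (simp add: sum.cartesian_product')
  also have "(\<Sum>st\<in>?Qs. (1::real)\<^sup>2) = 2 ^ m1 * 2 ^ m2"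
    by (simp add: card_cartesian_product card_Pow)
  finally have W2: "W\<^sup>2 \<le> 2 ^ m1 * 2 ^ m2" by simp
  define B1 where "B1 = 2 powr (real (m1 + m2) / 2)"
  define B2 where "B2 = 2 powr (real (m1' + m2') / 2)"
  have B1sq: "B1\<^sup>2 = 2 ^ m1 * 2 ^ m2"
  proof -
    have "B1\<^sup>2 = 2 powr (real (m1 + m2) / 2 + real (m1 + m2) / 2)"
      unfolding B1_def power2_eq_square by (rule powr_add[symmetric])
    also have "\<dots> = 2 powr (real (m1 + m2))" by simp
    also have "\<dots> = 2 ^ (m1 + m2)" by (rule powr_realpow) simp
    finally show ?thesis by (simp add: power_add)
  qed
  have B2sq: "B2\<^sup>2 = 2 ^ m1' * 2 ^ m2'"
  proof -
    have "B2\<^sup>2 = 2 powr (real (m1' + m2') / 2 + real (m1' + m2') / 2)"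
      unfolding B2_def power2_eq_square by (rule powr_add[symmetric])
    also have "\<dots> = 2 powr (real (m1' + m2'))" by simp
    also have "\<dots> = 2 ^ (m1' + m2')" by (rule powr_realpow) simp
    finally show ?thesis by (simp add: power_add)
  qed
  have WB1: "W \<le> B1"
    by (rule power2_le_imp_le) (use W2 B1sq in \<open>simp_all add: B1_def\<close>)
  have cB2: "1 / \<bar>c\<bar> \<le> B2"
  proof (rule power2_le_imp_le)
    show "(1 / \<bar>c\<bar>)\<^sup>2 \<le> B2\<^sup>2" unfolding B2sq using c2 c0
      by (simp add: power_divide field_simps)
    show "0 \<le> B2" unfolding B2_def by simp
  qed
  have ratio: "W / \<bar>c\<bar> \<le> B1 * B2"
  proof -
    have "W / \<bar>c\<bar> = W * (1 / \<bar>c\<bar>)" by simp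
    also have "\<dots> \<le> B1 * B2"
      by (rule mult_mono[OF WB1 cB2]) (use Wpos in \<open>simp_all add: B1_def\<close>)
    finally show ?thesis .
  qed
  have BB: "(B1 * B2) ^ k = 2 powr (real (m1 + m2 + m1' + m2') * real k / 2)"
  proof -
    have "B1 * B2 = 2 powr (real (m1 + m2) / 2 + real (m1' + m2') / 2)"
      unfolding B1_def B2_def by (rule powr_add[symmetric])
    also have "real (m1 + m2) / 2 + real (m1' + m2') / 2 = real (m1 + m2 + m1' + m2') / 2"
      by (simp add: field_simps)
    finally have "(B1 * B2) ^ k = (2 powr (real (m1 + m2 + m1' + m2') / 2)) ^ k" by simp
    also have "\<dots> = 2 powr (real k * (real (m1 + m2 + m1' + m2') / 2))" by (rule powr_power) simp
    finally show ?thesis by (simp add: field_simps)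
  qed
  let ?M = "2 powr (real (m1 + m2 + m1' + m2') * real k / 2)"
  have bdd: "bdd_above ((\<lambda>C. L1k n k (fiber g' m1' m2' n C)) ` rand_protocols d)"
    by (rule bdd_aboveI2[where M="real (card {I. I \<subseteq> {..<n} \<and> card I = k})"]) (rule L1k_fiber_bound)
  have each: "L1k n k (fiber g m1 m2 n C) \<le> ?M * L1k_gadget k g' d m1' m2' n"
    if C: "C \<in> rand_protocols d" for C
  proof -
    obtain C' where C': "C' \<in> rand_protocols d"
      and eq: "L1k n k (fiber g' m1' m2' n C') = (\<bar>c\<bar> / W) ^ k * L1k n k (fiber g m1 m2 n C)"
      using exists_lift[OF assms(1,2) assms(3) assms(4) S'sub S'ne T'sub T'ne C, of n k]
      unfolding c_def W_def by blast
    have "L1k n k (fiber g m1 m2 n C) = (W / \<bar>c\<bar>) ^ k * L1k n k (fiber g' m1' m2' n C')"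
      using eq c0 Wpos by (simp add: power_divide field_simps)
    also have "\<dots> \<le> (B1 * B2) ^ k * L1k n k (fiber g' m1' m2' n C')"
      by (intro mult_right_mono power_mono ratio L1k_nonneg) (use Wpos in simp)
    also have "\<dots> \<le> (B1 * B2) ^ k * L1k_gadget k g' d m1' m2' n"
      unfolding L1k_gadget_def
      by (intro mult_left_mono cSUP_upper[OF C' bdd]) (simp add: B1_def B2_def)
    finally show ?thesis unfolding BB .
  qed
  show ?thesis
    unfolding L1k_gadget_def[of k g]
    by (rule cSUP_least) (use rand_zero in blast, rule each, simp only: L1k_gadget_def)
qed


end
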